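(* For each alphabet $A$ and each weight $\mathbf a$, the metric tree $\mathbb{T}^{A,\mathbf a}$ is geodesic.
   Context: An alphabet is $A=\mathbb N$ or $A=\{1,\dots,M\}$ with $M\ge2$. $A^k$: words of length $k$ ($A^0=\{\varepsilon\}$), $A^*=\bigcup_kA^k$, $A^{\mathbb N}$: infinite words; for $u\in A^*$, $A^n_u$ and $A^{\mathbb N}_u$ are the words of length $n$, resp. infinite words, beginning with $u$; $w(n)$ is the length-$n$ prefix; $i^{(k)}$ is $k$ copies of $i$. Graphs $G^A_k=(A^k,E^A_k)$: $E^A_1=\{\{1,i\}:i\in A\setminus\{1\}\}$, $E^A_{k+1}=\{\{12^{(k)},i1^{(k)}\}:i\in A\setminus\{1\}\}\cup\{\{iw,iu\}:i\in A,\{w,u\}\in E^A_k\}$. $A^{\mathbb N}_{u_1}\wedge A^{\mathbb N}_{u_2}$ is the set of $w\in A^{\mathbb N}_{u_1}$ such that for every $n>\max\{|u_1|,|u_2|\}$ there is $u\in A^n_{u_2}$ with $\{w(n),u\}\in E^A_n$, together with the symmetric set with $u_1,u_2$ swapped. A chain joining $w,w'\in A^{\mathbb N}$ is a list $A^{\mathbb N}_{v_1},\dots,A^{\mathbb N}_{v_N}$ with $w\in A^{\mathbb N}_{v_1}$, $w'\in A^{\mathbb N}_{v_N}$ and $A^{\mathbb N}_{v_i}\wedge A^{\mathbb N}_{v_{i+1}}\ne\emptyset$. A weight is a non-increasing $\mathbf a:\mathbb N\to(0,1/2]$ with $\mathbf a(1)=\mathbf a(2)=1/2$, $\lim\mathbf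 a(i)=0$; $\Delta_{\mathbf a}(\varepsilon)=1$, $\Delta_{\mathbf a}(i_1\cdots i_k)=\prod\mathbf a(i_j)$. $\rho_{A,\mathbf a}(w,u)=\inf\sum_{i=1}^N\Delta_{\mathbf a}(v_i)$ over chains joining $w$ and $u$; $\mathbb{T}^{A,\mathbf a}$ is the quotient of $A^{\mathbb N}$ by $\rho_{A,\mathbf a}(w,u)=0$ with metric $d_{A,\mathbf a}([w],[u])=\rho_{A,\mathbf a}(w,u)$. Geodesic: any two points $x,y$ are joined by a curve isometric to an interval of length $d(x,y)$. *)

theory Defs
  imports Complex_Main
begin

text \<open>Letters are positive naturals; an alphabet is a set A \<subseteq> {1..}.
  Finite words are lists, infinite words are functions nat \<Rightarrow> nat (index 0 = first letter).\<close>

definition is_alphabet :: "nat set \<Rightarrow> bool" where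
  "is_alphabet A \<longleftrightarrow> A = {1..} \<or> (\<exists>M\<ge>2. A = {1..M})"

definition words :: "nat set \<Rightarrow> nat \<Rightarrow> nat list set" where
  "words A n = {u. length u = n \<and> set u \<subseteq> A}"

definition infwords :: "nat set \<Rightarrow> (nat \<Rightarrow> nat) set" where
  "infwords A = {w. \<forall>i. w i \<in> A}"

definition pref :: "(nat \<Rightarrow> nat) \<Rightarrow> nat \<Rightarrow> nat list" where
  "pref w n = map w [0..<n]"

definition cyl :: "nat set \<Rightarrow> nat list \<Rightarrow> (nat \<Rightarrow> nat) set" where
  "cyl A u = {w \<in> infwords A. pref w (length u) = u}"

fun edges :: "nat set \<Rightarrow> nat \<Rightarrow> nat list set set" where
  "edges A 0 = {}"
| "edges A (Suc k) =
     {{1 # replicate k 2, i # replicate k 1} | i. i \<in> A \<and> i \<noteq> 1}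
     \<union> {{i # w, i # u} | i w u. i \<in> A \<and> {w, u} \<in> edges A k}"

definition wedge_half :: "nat set \<Rightarrow> nat list \<Rightarrow> nat list \<Rightarrow> (nat \<Rightarrow> nat) set" where
  "wedge_half A u1 u2 = {w \<in> cyl A u1. \<forall>n > max (length u1) (length u2).
      \<exists>u \<in> words A n. take (length u2) u = u2 \<and> {pref w n, u} \<in> edges A n}"

definition wedge :: "nat set \<Rightarrow> nat list \<Rightarrow> nat list \<Rightarrow> (nat \<Rightarrow> nat) set" where
  "wedge A u1 u2 = wedge_half A u1 u2 \<union> wedge_half A u2 u1"

definition is_chain :: "nat set \<Rightarrow> (nat \<Rightarrow> nat) \<Rightarrow> (nat \<Rightarrow> nat) \<Rightarrow> nat list list \<Rightarrow> bool" where
  "is_chain A w w' vs \<longleftrightarrow> vs \<noteq> [] \<and> (\<forall>v \<in> set vs. set v \<subseteq> A) \<and>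
     w \<in> cyl A (hd vs) \<and> w' \<in> cyl A (last vs) \<and>
     (\<forall>i. Suc i < length vs \<longrightarrow> wedge A (vs ! i) (vs ! Suc i) \<noteq> {})"

definition is_weight :: "(nat \<Rightarrow> real) \<Rightarrow> bool" where
  "is_weight a \<longleftrightarrow> (\<forall>i\<ge>1. 0 < a i \<and> a i \<le> 1/2) \<and>
     (\<forall>i j. 1 \<le> i \<longrightarrow> i \<le> j \<longrightarrow> a j \<le> a i) \<and>
     a 1 = 1/2 \<and> a 2 = 1/2 \<and> a \<longlonglongrightarrow> 0"

definition Delta :: "(nat \<Rightarrow> real) \<Rightarrow> nat list \<Rightarrow> real" where
  "Delta a v = prod_list (map a v)"

definition rho :: "nat set \<Rightarrow> (nat \<Rightarrow> real) \<Rightarrow> (nat \<Rightarrow> nat) \<Rightarrow> (nat \<Rightarrow> nat) \<Rightarrow> real" where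
  "rho A a w u = Inf {sum_list (map (Delta a) vs) | vs. is_chain A w u vs}"

definition tree :: "nat set \<Rightarrow> (nat \<Rightarrow> real) \<Rightarrow> (nat \<Rightarrow> nat) set set" where
  "tree A a = infwords A // {(w, u). w \<in> infwords A \<and> u \<in> infwords A \<and> rho A a w u = 0}"

definition tdist :: "nat set \<Rightarrow> (nat \<Rightarrow> real) \<Rightarrow> (nat \<Rightarrow> nat) set \<Rightarrow> (nat \<Rightarrow> nat) set \<Rightarrow> real" where
  "tdist A a X Y = rho A a (SOME w. w \<in> X) (SOME u. u \<in> Y)"

definition geodesic_space :: "'p set \<Rightarrow> ('p \<Rightarrow> 'p \<Rightarrow> real) \<Rightarrow> bool" where
  "geodesic_space S d \<longleftrightarrow> (\<forall>x\<in>S. \<forall>y\<in>S. \<exists>\<gamma>. \<gamma> 0 = x \<and> \<gamma> (d x y) = y \<and>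
      \<gamma> ` {0..d x y} \<subseteq> S \<and> (\<forall>s\<in>{0..d x y}. \<forall>t\<in>{0..d x y}. d (\<gamma> s) (\<gamma> t) = \<bar>s - t\<bar>))"

end

theory Submission
  imports Defs
begin

definition shift :: "(nat \<Rightarrow> nat) \<Rightarrow> nat \<Rightarrow> nat" where "shift x = (\<lambda>n. x (Suc n))"
definition two :: "nat \<Rightarrow> nat" where "two = (\<lambda>_. 2)"
definition one :: "nat \<Rightarrow> nat" where "one = (\<lambda>_. 1)"
abbreviation cns :: "nat \<Rightarrow> (nat \<Rightarrow> nat) \<Rightarrow> nat \<Rightarrow> nat" where "cns c x \<equiv> case_nat c x"

lemma shift_cns[simp]: "shift (cns c x) = x" by (simp add: shift_def)
lemma cns_shift: "cns (x 0) (shift x) = x" by (rule ext) (simp add: shift_def split: nat.split)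
lemma shift_two[simp]: "shift two = two" by (simp add: shift_def two_def)
lemma shift_one[simp]: "shift one = one" by (simp add: shift_def one_def)
lemma two0[simp]: "two 0 = 2" by (simp add: two_def)
lemma one0[simp]: "one 0 = 1" by (simp add: one_def)
lemma two_cns: "two = cns 2 two" by (rule ext) (simp add: two_def split: nat.split)
lemma one_cns: "one = cns 1 one" by (rule ext) (simp add: one_def split: nat.split)

definition aa :: "(nat \<Rightarrow> real) \<Rightarrow> nat \<Rightarrow> real" where "aa a c = max 0 (min (1/2) (a c))"
lemma aa_ge0: "0 \<le> aa a c" by (simp add: aa_def)
lemma aa_le: "aa a c \<le> 1/2" by (simp add: aa_def)

definition Phi :: "(nat \<Rightarrow> real) \<Rightarrow> ((nat \<Rightarrow> nat) \<Rightarrow> (nat \<Rightarrow> nat) \<Rightarrow> real) \<Rightarrow> (nat \<Rightarrow> nat) \<Rightarrow> (nat \<Rightarrow> nat) \<Rightarrow> real" where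
"Phi a G x y = (if x 0 = y 0 then (if x 0 = 1 then G (shift x) (shift y) / 2 else 1/2 + aa a (x 0) * G (shift x) (shift y))
   else if x 0 = 1 then G (shift x) two / 2 else if y 0 = 1 then G two (shift y) / 2 else 1/2)"

fun gn :: "(nat \<Rightarrow> real) \<Rightarrow> nat \<Rightarrow> (nat \<Rightarrow> nat) \<Rightarrow> (nat \<Rightarrow> nat) \<Rightarrow> real" where
  "gn a 0 = (\<lambda>x y. 0)"
| "gn a (Suc n) = Phi a (gn a n)"

lemma Phi_contr:
  assumes "\<And>u v. \<bar>G u v - H u v\<bar> \<le> e"
  shows "\<bar>Phi a G x y - Phi a H x y\<bar> \<le> e / 2"
proof -
  have e: "0 \<le> e" using assms[of x y] by linarith
  have m: "\<bar>aa a c * (G u v) - aa a c * H u v\<bar> \<le> e/2" for c u v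
  proof -
    have "\<bar>aa a c * (G u v) - aa a c * H u v\<bar> = aa a c * \<bar>G u v - H u v\<bar>"
      by (simp add: abs_mult aa_ge0 right_diff_distrib[symmetric])
    also have "\<dots> \<le> 1/2 * e" by (rule mult_mono) (use assms aa_le aa_ge0 e in auto)
    finally show ?thesis by simp
  qed
  show ?thesis unfolding Phi_def using assms m
    by (auto simp: abs_le_iff divide_simps) (smt (verit) assms abs_le_iff)+
qed

lemma gn_diff: "\<bar>gn a (Suc n) x y - gn a n x y\<bar> \<le> (1/2)^(Suc n)"
proof (induction n arbitrary: x y)
  case 0
  then show ?case by (simp add: Phi_def)
next
  case (Suc n)
  have "\<bar>Phi a (gn a (Suc n)) x y - Phi a (gn a n) x y\<bar> \<le> (1/2)^(Suc n) / 2"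
    by (rule Phi_contr) (use Suc in simp)
  then show ?case by simp
qed

definition gg :: "(nat \<Rightarrow> real) \<Rightarrow> (nat \<Rightarrow> nat) \<Rightarrow> (nat \<Rightarrow> nat) \<Rightarrow> real" where
  "gg a x y = lim (\<lambda>n. gn a n x y)"

lemma gn_conv: "(\<lambda>n. gn a n x y) \<longlonglongrightarrow> gg a x y"
proof -
  define d where "d = (\<lambda>n. gn a (Suc n) x y - gn a n x y)"
  have "summable (\<lambda>n. (1/2::real)^(Suc n))" by (simp add: summable_geometric)
  then have s: "summable d"
    by (rule summable_comparison_test[rotated]) (use gn_diff in \<open>auto simp: d_def\<close>)
  have e: "gn a n x y = (\<Sum>i<n. d i)" for n
    using sum_lessThan_telescope[of "\<lambda>n. gn a n x y" n] by (simp add: d_def)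
  have "(\<lambda>n. gn a n x y) \<longlonglongrightarrow> suminf d" unfolding e by (rule summable_LIMSEQ[OF s])
  then show ?thesis unfolding gg_def by (simp add: convergentI limI)
qed

lemma gg_fix: "gg a x y = Phi a (gg a) x y"
proof -
  have 1: "(\<lambda>n. gn a (Suc n) x y) \<longlonglongrightarrow> gg a x y" using gn_conv LIMSEQ_Suc by blast
  have 2: "(\<lambda>n. gn a (Suc n) x y) \<longlonglongrightarrow> Phi a (gg a) x y"
    unfolding gn.simps Phi_def by (auto intro!: tendsto_intros gn_conv)
  show ?thesis using LIMSEQ_unique[OF 1 2] .
qed

lemma gn_basic: "0 \<le> gn a n x y \<and> gn a n x y \<le> 1 \<and> gn a n x y = gn a n y x \<and> gn a n x y \<le> gn a n x x"
proof (induction n arbitrary: x y)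
  case 0 then show ?case by simp
next
  case (Suc n)
  let ?G = "gn a n"
  have b: "0 \<le> ?G u v" "?G u v \<le> 1" "?G u v = ?G v u" "?G u v \<le> ?G u u" for u v using Suc by auto
  have ab: "0 \<le> aa a c" "aa a c \<le> 1/2" for c using aa_ge0 aa_le by auto
  have m1: "0 \<le> aa a c * ?G u v" "aa a c * ?G u v \<le> 1/2" for c u v
    using mult_mono[OF ab(2) b(2)] b(1) ab(1) by (auto simp: mult_nonneg_nonneg)
  have m2: "aa a c * ?G u v \<le> aa a c * ?G u u" for c u v using mult_left_mono[OF b(4) ab(1)] .
  show ?case unfolding gn.simps Phi_def
    using b m1 m2 by (auto simp: divide_simps) (smt (verit) b m1)+
qed

lemma Phi_s1: "x 0 = 1 \<Longrightarrow> y 0 = 1 \<Longrightarrow> Phi a G x y = G (shift x) (shift y) / 2" by (simp add: Phi_def)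
lemma Phi_s2: "x 0 = y 0 \<Longrightarrow> x 0 \<noteq> 1 \<Longrightarrow> Phi a G x y = 1/2 + aa a (x 0) * G (shift x) (shift y)" by (simp add: Phi_def)
lemma Phi_s3: "x 0 = 1 \<Longrightarrow> y 0 \<noteq> 1 \<Longrightarrow> Phi a G x y = G (shift x) two / 2" by (simp add: Phi_def)
lemma Phi_s4: "x 0 \<noteq> 1 \<Longrightarrow> y 0 = 1 \<Longrightarrow> Phi a G x y = G two (shift y) / 2" by (simp add: Phi_def)
lemma Phi_s5: "x 0 \<noteq> 1 \<Longrightarrow> y 0 \<noteq> 1 \<Longrightarrow> x 0 \<noteq> y 0 \<Longrightarrow> Phi a G x y = 1/2" by (simp add: Phi_def)
lemmas Phi_s = Phi_s1 Phi_s2 Phi_s3 Phi_s4 Phi_s5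

lemma Phi_ultra:
  assumes b0: "\<And>u v. 0 \<le> G u v" and b1: "\<And>u v. G u v \<le> 1" and sy: "\<And>u v. G u v = G v u"
    and U: "\<And>u v w. min (G u v) (G v w) \<le> G u w"
  shows "min (Phi a G x y) (Phi a G y z) \<le> Phi a G x z"
proof -
  have m1: "0 \<le> aa a c * G u v" for c u v using b0 aa_ge0 by (simp add: mult_nonneg_nonneg)
  have u1': "min (aa a c * G u v) (aa a c * G v w) \<le> aa a c * G u w" for c u v w
    using mult_left_mono[OF U aa_ge0] by (simp add: min_mult_distrib_left aa_ge0)
  show ?thesis
  proof (cases "x 0 = 1")
    case x1: True
    show ?thesis
    proof (cases "y 0 = 1")
      case y1: True
      show ?thesis
      proof (cases "z 0 = 1")
        case True
        then show ?thesis using x1 y1 U[of "shift x" "shift y" "shift z"] by (simp add: Phi_s min_def split: if_splits)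
      next
        case False
        then show ?thesis using x1 y1 U[of "shift x" "shift y" two] by (simp add: Phi_s min_def split: if_splits)
      qed
    next
      case y1: False
      show ?thesis
      proof (cases "z 0 = 1")
        case True
        then show ?thesis using x1 y1 U[of "shift x" two "shift z"] sy[of "shift y" two] by (simp add: Phi_s min_def split: if_splits)
      next
        case False
        then show ?thesis using x1 y1 by (simp add: Phi_s min_def split: if_splits)
      qed
    qed
  next
    case x1: False
    show ?thesis
    proof (cases "y 0 = 1")
      case y1: True
      show ?thesis
      proof (cases "z 0 = 1")
        case True
        then show ?thesis using x1 y1 U[of two "shift y" "shift z"] by (simp add: Phi_s min_def split: if_splits)
      next
        case False
        then show ?thesis using x1 y1 b1[of two "shift y"] m1[of "x 0" "shift x" "shift z"]
          by (cases "x 0 = z 0") (simp_all add: Phi_s min_le_iff_disj)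
      qed
    next
      case y1: False
      show ?thesis
      proof (cases "z 0 = 1")
        case True
        then show ?thesis using x1 y1 by (cases "x 0 = y 0") (simp_all add: Phi_s min_def)
      next
        case z1: False
        show ?thesis
        proof (cases "x 0 = y 0")
          case True
          then show ?thesis using x1 y1 z1 u1'[of "x 0" "shift x" "shift y" "shift z"] m1[of "x 0" "shift x" "shift y"]
            by (cases "y 0 = z 0") (simp_all add: Phi_s min_le_iff_disj)
        next
          case False
          then show ?thesis using x1 y1 z1 m1[of "x 0" "shift x" "shift z"] m1[of "y 0" "shift y" "shift z"]
            by (cases "y 0 = z 0"; cases "x 0 = z 0") (simp_all add: Phi_s min_le_iff_disj)
        qed
      qed
    qed
  qed
qed

lemma gn_ultra: "min (gn a n x y) (gn a n y z) \<le> gn a n x z"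
proof (induction n arbitrary: x y z)
  case 0 then show ?case by simp
next
  case (Suc n)
  show ?case unfolding gn.simps by (rule Phi_ultra) (use gn_basic Suc in auto)
qed

lemma gg_basic: "0 \<le> gg a x y" "gg a x y \<le> 1" "gg a x y = gg a y x" "gg a x y \<le> gg a x x"
  "min (gg a x y) (gg a y z) \<le> gg a x z"
proof -
  show "0 \<le> gg a x y" by (rule LIMSEQ_le_const[OF gn_conv]) (use gn_basic in auto)
  show "gg a x y \<le> 1" by (rule LIMSEQ_le_const2[OF gn_conv]) (use gn_basic in auto)
  show "gg a x y = gg a y x" using gn_conv[of a x y] gn_conv[of a y x] gn_basic
    by (metis (no_types, lifting) LIMSEQ_unique ext)
  show "gg a x y \<le> gg a x x" by (rule LIMSEQ_le[OF gn_conv gn_conv]) (use gn_basic in auto)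
  show "min (gg a x y) (gg a y z) \<le> gg a x z"
    by (rule LIMSEQ_le[OF tendsto_min[OF gn_conv gn_conv] gn_conv]) (use gn_ultra in auto)
qed

lemma gg_s1: "x 0 = 1 \<Longrightarrow> y 0 = 1 \<Longrightarrow> gg a x y = gg a (shift x) (shift y) / 2"
  by (subst gg_fix) (simp add: Phi_s)
lemma gg_s2: "x 0 = y 0 \<Longrightarrow> x 0 \<noteq> 1 \<Longrightarrow> gg a x y = 1/2 + aa a (x 0) * gg a (shift x) (shift y)"
  by (subst gg_fix) (simp add: Phi_s)
lemma gg_s3: "x 0 = 1 \<Longrightarrow> y 0 \<noteq> 1 \<Longrightarrow> gg a x y = gg a (shift x) two / 2"
  by (subst gg_fix) (simp add: Phi_s)
lemma gg_s4: "x 0 \<noteq> 1 \<Longrightarrow> y 0 = 1 \<Longrightarrow> gg a x y = gg a two (shift y) / 2"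
  by (subst gg_fix) (simp add: Phi_s)
lemma gg_s5: "x 0 \<noteq> 1 \<Longrightarrow> y 0 \<noteq> 1 \<Longrightarrow> x 0 \<noteq> y 0 \<Longrightarrow> gg a x y = 1/2"
  by (subst gg_fix) (simp add: Phi_s)

lemma weight_facts:
  assumes "is_weight a"
  shows "aa a 1 = 1/2" "aa a 2 = 1/2" "\<And>c. 1 \<le> c \<Longrightarrow> aa a c = a c" "\<And>c. 1 \<le> c \<Longrightarrow> 0 < a c"
    "\<And>c. 1 \<le> c \<Longrightarrow> a c \<le> 1/2"
  using assms unfolding is_weight_def aa_def by auto

lemma gg_two: "is_weight a \<Longrightarrow> gg a two two = 1"
  using gg_s2[of two two a] weight_facts(2)[of a] by simp

lemma gg_one: "gg a one one = 0"
  using gg_s1[of one one a] by simp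

lemma gg_x_one: "gg a x one = 0"
  using gg_basic(1)[of a x one] gg_basic(3)[of a x one] gg_basic(4)[of a one x] gg_one[of a] by linarith

definition hh :: "(nat \<Rightarrow> real) \<Rightarrow> (nat \<Rightarrow> nat) \<Rightarrow> real" where "hh a x = gg a x x"
definition ff :: "(nat \<Rightarrow> real) \<Rightarrow> (nat \<Rightarrow> nat) \<Rightarrow> (nat \<Rightarrow> nat) \<Rightarrow> real" where
  "ff a x y = hh a x + hh a y - 2 * gg a x y"

lemma hh_bounds: "0 \<le> hh a x" "hh a x \<le> 1" unfolding hh_def using gg_basic by auto

lemma gg_le_hh: "gg a x y \<le> hh a x" "gg a x y \<le> hh a y"
  unfolding hh_def using gg_basic(4)[of a x y] gg_basic(4)[of a y x] gg_basic(3)[of a x y] by linarith+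

lemma ff_sym: "ff a x y = ff a y x" unfolding ff_def using gg_basic(3)[of a x y] by linarith
lemma ff_self[simp]: "ff a x x = 0" unfolding ff_def hh_def by simp
lemma ff_nonneg: "0 \<le> ff a x y" unfolding ff_def using gg_le_hh[of a x y] by simp
lemma ff_tri: "ff a x z \<le> ff a x y + ff a y z"
proof -
  have "min (gg a x y) (gg a y z) \<le> gg a x z" by (rule gg_basic(5))
  moreover have "gg a x y \<le> hh a y" "gg a y z \<le> hh a y" using gg_le_hh by auto
  ultimately show ?thesis unfolding ff_def by (simp add: min_def split: if_splits)
qed
lemma ff_one: "ff a x one = hh a x" unfolding ff_def using gg_x_one[of a x] gg_one[of a] by (simp add: hh_def)

lemma hh_r1: "x 0 = 1 \<Longrightarrow> hh a x = hh a (shift x) / 2" unfolding hh_def by (rule gg_s1)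
lemma hh_r2: "x 0 \<noteq> 1 \<Longrightarrow> hh a x = 1/2 + aa a (x 0) * hh a (shift x)" unfolding hh_def by (rule gg_s2) auto

lemma ff_r1: "x 0 = 1 \<Longrightarrow> y 0 = 1 \<Longrightarrow> ff a x y = ff a (shift x) (shift y) / 2"
  unfolding ff_def using hh_r1[of x a] hh_r1[of y a] gg_s1[of x y a] by simp
lemma ff_r2: "x 0 = y 0 \<Longrightarrow> x 0 \<noteq> 1 \<Longrightarrow> ff a x y = aa a (x 0) * ff a (shift x) (shift y)"
  unfolding ff_def using hh_r2[of x a] hh_r2[of y a] gg_s2[of x y a] by (simp add: algebra_simps)
lemma ff_r3: "is_weight a \<Longrightarrow> x 0 = 1 \<Longrightarrow> y 0 \<noteq> 1 \<Longrightarrow> ff a x y = ff a (shift x) two / 2 + aa a (y 0) * hh a (shift y)"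
  unfolding ff_def using hh_r1[of x a] hh_r2[of y a] gg_s3[of x y a] gg_two[of a] unfolding hh_def by simp
lemma ff_r5: "x 0 \<noteq> 1 \<Longrightarrow> y 0 \<noteq> 1 \<Longrightarrow> x 0 \<noteq> y 0 \<Longrightarrow> ff a x y = aa a (x 0) * hh a (shift x) + aa a (y 0) * hh a (shift y)"
  unfolding ff_def using hh_r2[of x a] hh_r2[of y a] gg_s5[of x y a] by (simp add: algebra_simps)

lemma ff_cns: "is_weight a \<Longrightarrow> ff a (cns c p) (cns c q) = aa a c * ff a p q"
proof (cases "c = 1")
  case True
  assume w: "is_weight a"
  have A: "aa a c = 1/2" using True weight_facts(1)[OF w] by simp
  have B: "ff a (cns c p) (cns c q) = ff a p q / 2" using True ff_r1[of "cns c p" "cns c q" a] by simp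
  show ?thesis unfolding A B by simp
next
  case False
  then show ?thesis using ff_r2[of "cns c p" "cns c q" a] by simp
qed

lemma le_zero_geom: assumes "\<And>n. e \<le> (1/2::real)^n" shows "e \<le> 0"
proof (rule ccontr)
  assume "\<not> e \<le> 0"
  then have "e > 0" by simp
  then obtain n where "(1/2::real)^n < e" using real_arch_pow_inv[of e "1/2"] by auto
  with assms[of n] show False by simp
qed

lemma ff_le1_aux: "is_weight a \<Longrightarrow> ff a x y \<le> 1 + (1/2)^n"
proof (induction n arbitrary: x y)
  case 0
  then show ?case using hh_bounds[of a x] hh_bounds[of a y] gg_basic(1)[of a x y] by (simp add: ff_def)
next
  case (Suc n)
  define q :: real where "q = (1/2)^n"
  have q: "(1/2::real)^Suc n = q/2" "0 \<le> q" unfolding q_def by simp_all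
  have ab: "0 \<le> aa a c" "aa a c \<le> 1/2" for c using aa_ge0 aa_le by auto
  have hb: "aa a c * hh a u \<le> 1/2" for c u using mult_mono[OF ab(2) hh_bounds(2)] hh_bounds(1) ab(1) by simp
  have IH: "ff a u v \<le> 1 + q" for u v using Suc.IH[OF Suc.prems] unfolding q_def .
  have fb: "aa a c * ff a u v \<le> 1/2 + q/2" for c u v
  proof -
    have "aa a c * ff a u v \<le> 1/2 * (1+q)" by (rule mult_mono[OF ab(2) IH]) (auto simp: ff_nonneg)
    also have "1/2 * (1+q) = 1/2 + q/2" by simp
    finally show ?thesis .
  qed
  have "ff a x y \<le> 1 + q/2"
  proof -
    consider "x 0 = y 0" "x 0 = 1" | "x 0 = y 0" "x 0 \<noteq> 1" | "x 0 \<noteq> y 0" "x 0 = 1" | "x 0 \<noteq> y 0" "y 0 = 1"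
      | "x 0 \<noteq> y 0" "x 0 \<noteq> 1" "y 0 \<noteq> 1" by blast
    then show ?thesis
    proof cases
      case 1
      have "ff a x y = ff a (shift x) (shift y) / 2" by (rule ff_r1) (use 1 in auto)
      then show ?thesis using IH[of "shift x" "shift y"] q by linarith
    next
      case 2
      have "ff a x y = aa a (x 0) * ff a (shift x) (shift y)" by (rule ff_r2) (use 2 in auto)
      then show ?thesis using fb[of "x 0" "shift x" "shift y"] q by linarith
    next
      case 3
      have "ff a x y = ff a (shift x) two / 2 + aa a (y 0) * hh a (shift y)" by (rule ff_r3[OF Suc.prems]) (use 3 in auto)
      then show ?thesis using IH[of "shift x" two] hb[of "y 0" "shift y"] q by linarith
    next
      case 4
      have "ff a y x = ff a (shift y) two / 2 + aa a (x 0) * hh a (shift x)" by (rule ff_r3[OF Suc.prems]) (use 4 in auto)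
      then show ?thesis using ff_sym[of a x y] IH[of "shift y" two] hb[of "x 0" "shift x"] q by linarith
    next
      case 5
      have "ff a x y = aa a (x 0) * hh a (shift x) + aa a (y 0) * hh a (shift y)" by (rule ff_r5) (use 5 in auto)
      then show ?thesis using hb[of "x 0" "shift x"] hb[of "y 0" "shift y"] q by linarith
    qed
  qed
  then show ?case using q by simp
qed

lemma ff_le1: "is_weight a \<Longrightarrow> ff a x y \<le> 1"
proof -
  assume w: "is_weight a"
  have "ff a x y - 1 \<le> 0"
  proof (rule le_zero_geom)
    fix n
    have "ff a x y \<le> 1 + (1/2)^n" by (rule ff_le1_aux[OF w])
    then show "ff a x y - 1 \<le> (1/2)^n" by linarith
  qed
  then show ?thesis by simp
qed

lemma alph: assumes "is_alphabet A" shows "1 \<in> A" "2 \<in> A" "\<And>c. c \<in> A \<Longrightarrow> 1 \<le> c"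
  using assms unfolding is_alphabet_def by auto

lemma pref_0[simp]: "pref x 0 = []" by (simp add: pref_def)
lemma pref_Suc_cns[simp]: "pref (cns c x) (Suc n) = c # pref x n"
  unfolding pref_def by (simp add: map_upt_Suc del: upt_Suc)
lemma length_pref[simp]: "length (pref x n) = n" by (simp add: pref_def)
lemma take_pref: "m \<le> n \<Longrightarrow> take m (pref x n) = pref x m"
  unfolding pref_def by (simp add: take_map min_def)
lemma pref_two: "pref two n = replicate n 2" unfolding pref_def two_def by (simp add: map_replicate_const)
lemma pref_one: "pref one n = replicate n 1" unfolding pref_def one_def by (simp add: map_replicate_const)
lemma nth_pref: "i < n \<Longrightarrow> pref x n ! i = x i" unfolding pref_def by simp
lemma set_pref: "x \<in> infwords A \<Longrightarrow> set (pref x n) \<subseteq> A" unfolding pref_def infwords_def by auto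

lemma infwords_cns[simp]: "cns c x \<in> infwords A \<longleftrightarrow> c \<in> A \<and> x \<in> infwords A"
  unfolding infwords_def by (auto split: nat.splits)
lemma infwords_shift: "x \<in> infwords A \<Longrightarrow> shift x \<in> infwords A" unfolding infwords_def shift_def by auto
lemma infwords_two: "is_alphabet A \<Longrightarrow> two \<in> infwords A" unfolding infwords_def two_def using alph by auto
lemma infwords_one: "is_alphabet A \<Longrightarrow> one \<in> infwords A" unfolding infwords_def one_def using alph by auto
lemma infwords_0: "x \<in> infwords A \<Longrightarrow> x 0 \<in> A" unfolding infwords_def by auto

lemma cyl_Nil[simp]: "cyl A [] = infwords A" unfolding cyl_def by simp
lemma cyl_cns: "cns c x \<in> cyl A (d # v) \<longleftrightarrow> c = d \<and> c \<in> A \<and> x \<in> cyl A v"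
  unfolding cyl_def by auto
lemma cyl_Cons_D: "x \<in> cyl A (d # v) \<Longrightarrow> x = cns d (shift x) \<and> shift x \<in> cyl A v \<and> d \<in> A"
proof -
  assume h: "x \<in> cyl A (d # v)"
  have "pref x (Suc (length v)) = d # v" using h unfolding cyl_def by simp
  then have "x 0 = d" "pref (shift x) (length v) = v"
    using pref_Suc_cns[of "x 0" "shift x" "length v"] unfolding cns_shift by auto
  moreover have "x \<in> infwords A" using h unfolding cyl_def by simp
  ultimately show ?thesis using cns_shift[of x] infwords_shift[of x A] infwords_0[of x A] unfolding cyl_def by auto
qed
lemma cyl_pref: "x \<in> infwords A \<Longrightarrow> x \<in> cyl A (pref x n)" unfolding cyl_def by simp

lemma Delta_Nil[simp]: "Delta a [] = 1" by (simp add: Delta_def)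
lemma Delta_Cons[simp]: "Delta a (c # v) = a c * Delta a v" by (simp add: Delta_def)

lemma Delta_bounds:
  assumes w: "is_weight a" and al: "is_alphabet A" and "set v \<subseteq> A"
  shows "0 \<le> Delta a v \<and> Delta a v \<le> (1/2)^length v"
  using assms(3)
proof (induction v)
  case Nil then show ?case by simp
next
  case (Cons c v)
  have c: "0 < a c" "a c \<le> 1/2" using weight_facts[OF w] alph(3)[OF al] Cons.prems by auto
  have "a c * Delta a v \<le> 1/2 * (1/2)^length v"
    by (rule mult_mono) (use c Cons in auto)
  then show ?case using c Cons by simp
qed

lemma diam:
  assumes w: "is_weight a" and al: "is_alphabet A"
  shows "P \<in> cyl A v \<Longrightarrow> Q \<in> cyl A v \<Longrightarrow> ff a P Q \<le> Delta a v"
proof (induction v arbitrary: P Q)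
  case Nil
  then show ?case using ff_le1[OF w] by simp
next
  case (Cons c v)
  obtain P' Q' where P: "P = cns c P'" "P' \<in> cyl A v" and Q: "Q = cns c Q'" "Q' \<in> cyl A v" and c: "c \<in> A"
    using cyl_Cons_D[OF Cons.prems(1)] cyl_Cons_D[OF Cons.prems(2)] by metis
  have ac: "aa a c = a c" "0 < a c" using weight_facts[OF w] alph(3)[OF al c] by auto
  have "ff a P Q = a c * ff a P' Q'" unfolding P Q ff_cns[OF w] ac ..
  also have "\<dots> \<le> a c * Delta a v" using Cons.IH[OF P(2) Q(2)] ac(2) by simp
  finally show ?case by simp
qed

lemma edge_ext:
  assumes w: "is_weight a" and al: "is_alphabet A"
  shows "{p, q} \<in> edges A n \<Longrightarrow> \<exists>P Q. P \<in> cyl A p \<and> Q \<in> cyl A q \<and> ff a P Q = 0"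
proof (induction n arbitrary: p q)
  case 0 then show ?case by simp
next
  case (Suc k)
  show ?case
  proof (cases "{p, q} \<in> {{1 # replicate k 2, i # replicate k 1} | i. i \<in> A \<and> i \<noteq> 1}")
    case True
    then obtain i where i: "i \<in> A" "i \<noteq> 1" and e: "{p, q} = {1 # replicate k 2, i # replicate k 1}" by blast
    define P0 where "P0 = cns 1 two"
    define Q0 where "Q0 = cns i one"
    have P0: "P0 \<in> cyl A (1 # replicate k 2)" unfolding P0_def cyl_def
      using alph[OF al] infwords_two[OF al] by (simp add: pref_two)
    have Q0: "Q0 \<in> cyl A (i # replicate k 1)" unfolding Q0_def cyl_def
      using i infwords_one[OF al] by (simp add: pref_one)
    have "ff a P0 Q0 = ff a two two / 2 + aa a i * hh a one"
      using ff_r3[OF w, of P0 Q0] i unfolding P0_def Q0_def by simp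
    then have f0: "ff a P0 Q0 = 0" using gg_one[of a] by (simp add: hh_def)
    from e have "(p = 1 # replicate k 2 \<and> q = i # replicate k 1) \<or> (p = i # replicate k 1 \<and> q = 1 # replicate k 2)"
      by (simp add: doubleton_eq_iff)
    then show ?thesis
    proof
      assume "p = 1 # replicate k 2 \<and> q = i # replicate k 1"
      then show ?thesis using P0 Q0 f0 by blast
    next
      assume "p = i # replicate k 1 \<and> q = 1 # replicate k 2"
      then show ?thesis using P0 Q0 f0 ff_sym[of a P0 Q0] by auto
    qed
  next
    case False
    then have "{p, q} \<in> {{i # w, i # u} | i w u. i \<in> A \<and> {w, u} \<in> edges A k}" using Suc.prems
      by (metis (no_types, lifting) UnE edges.simps(2))
    then obtain i w u where i: "i \<in> A" and wu: "{w, u} \<in> edges A k" and e: "{p, q} = {i # w, i # u}" by blast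
    have wu': "{u, w} \<in> edges A k" using wu by (simp add: insert_commute)
    obtain P Q where PQ: "P \<in> cyl A w" "Q \<in> cyl A u" "ff a P Q = 0" using Suc.IH[OF wu] by blast
    have c: "cns i P \<in> cyl A (i # w)" "cns i Q \<in> cyl A (i # u)" using PQ i cyl_cns by auto
    have f: "ff a (cns i P) (cns i Q) = 0" "ff a (cns i Q) (cns i P) = 0"
      using ff_cns[OF w] PQ(3) ff_sym[of a P Q] by auto
    from e have "(p = i # w \<and> q = i # u) \<or> (p = i # u \<and> q = i # w)" by (simp add: doubleton_eq_iff)
    then show ?thesis using c f by blast
  qed
qed

lemma neighbor:
  assumes al: "is_alphabet A"
  shows "s \<in> words A (Suc m) \<Longrightarrow> \<exists>u \<in> words A (Suc m). take m u = take m s \<and> {s, u} \<in> edges A (Suc m)"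
proof (induction m arbitrary: s)
  case 0
  then obtain c where s: "s = [c]" "c \<in> A" unfolding words_def by (auto simp: length_Suc_conv)
  show ?case
  proof (cases "c = 1")
    case True
    have e: "{s, [2]} \<in> edges A (Suc 0)" using s True alph[OF al] by auto
    have w2: "[2] \<in> words A (Suc 0)" using alph[OF al] unfolding words_def by auto
    have t: "take 0 [2] = take 0 s" by simp
    show ?thesis using e w2 t by blast
  next
    case False
    have "{[1], [c]} \<in> edges A (Suc 0)" using s False by auto
    then have e: "{s, [1]} \<in> edges A (Suc 0)" using s by (simp add: insert_commute)
    have w2: "[1] \<in> words A (Suc 0)" using alph[OF al] unfolding words_def by auto
    have t: "take 0 [1] = take 0 s" by simp
    show ?thesis using e w2 t by blast
  qed
next
  case (Suc m)
  then obtain c s' where s: "s = c # s'" "c \<in> A" "s' \<in> words A (Suc m)" unfolding words_def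
    by (auto simp: length_Suc_conv)
  obtain u' where u': "u' \<in> words A (Suc m)" "take m u' = take m s'" "{s', u'} \<in> edges A (Suc m)"
    using Suc.IH[OF s(3)] by blast
  have e: "{s, c # u'} \<in> edges A (Suc (Suc m))" using u'(3) s(1,2) by auto
  have w2: "c # u' \<in> words A (Suc (Suc m))" using u'(1) s(2) unfolding words_def by auto
  have t: "take (Suc m) (c # u') = take (Suc m) s" using u'(2) s(1) by simp
  show ?case using e w2 t by blast
qed

lemma wedge_touch:
  assumes w: "is_weight a" and al: "is_alphabet A"
    and h: "x \<in> wedge_half A v1 v2" and e: "0 < e"
  shows "\<exists>z \<in> cyl A v2. ff a x z \<le> e"
proof -
  obtain n0 where n0: "(1/2::real)^n0 < e" using real_arch_pow_inv[OF e, of "1/2"] by auto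
  define n where "n = Suc (max n0 (max (length v1) (length v2)))"
  have n: "n > max (length v1) (length v2)" "n0 \<le> n" unfolding n_def by auto
  have x: "x \<in> cyl A v1" using h unfolding wedge_half_def by auto
  then have xI: "x \<in> infwords A" unfolding cyl_def by auto
  obtain u where u: "u \<in> words A n" "take (length v2) u = v2" "{pref x n, u} \<in> edges A n"
    using h n(1) unfolding wedge_half_def by blast
  obtain P Q where PQ: "P \<in> cyl A (pref x n)" "Q \<in> cyl A u" "ff a P Q = 0"
    using edge_ext[OF w al u(3)] by blast
  have Qv2: "Q \<in> cyl A v2"
  proof -
    have "length u = n" using u(1) unfolding words_def by simp
    then have "pref Q n = u" using PQ(2) unfolding cyl_def by simp
    then have "pref Q (length v2) = v2" using take_pref[of "length v2" n Q] u(2) n(1) by simp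
    then show ?thesis using PQ(2) unfolding cyl_def by simp
  qed
  have "ff a x P \<le> Delta a (pref x n)" by (rule diam[OF w al cyl_pref[OF xI] PQ(1)])
  also have "\<dots> \<le> (1/2)^n" using Delta_bounds[OF w al set_pref[OF xI]] by simp
  also have "\<dots> \<le> (1/2)^n0" using n(2) by (simp add: power_decreasing)
  finally have "ff a x P \<le> e" using n0 by simp
  then have "ff a x Q \<le> e" using ff_tri[of a x Q P] PQ(3) ff_sym[of a P Q] by simp
  then show ?thesis using Qv2 by blast
qed

lemma chain_single: "is_chain A x y [v] \<longleftrightarrow> set v \<subseteq> A \<and> x \<in> cyl A v \<and> y \<in> cyl A v"
  unfolding is_chain_def by auto

lemma chain_cons:
  assumes "is_chain A x y (v # v' # vs)"
  shows "set v \<subseteq> A" "x \<in> cyl A v" "wedge A v v' \<noteq> {}" "\<And>z. z \<in> cyl A v' \<Longrightarrow> is_chain A z y (v' # vs)"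
proof -
  show "set v \<subseteq> A" "x \<in> cyl A v" using assms unfolding is_chain_def by auto
  show "wedge A v v' \<noteq> {}" using assms unfolding is_chain_def by (metis One_nat_def length_Cons lessI nth_Cons_0 nth_Cons_Suc zero_less_Suc Suc_mono)
  fix z assume z: "z \<in> cyl A v'"
  show "is_chain A z y (v' # vs)" unfolding is_chain_def
  proof (intro conjI allI impI)
    show "\<forall>u\<in>set (v' # vs). set u \<subseteq> A" using assms unfolding is_chain_def by auto
    show "y \<in> cyl A (last (v' # vs))" using assms unfolding is_chain_def by auto
    fix i assume "Suc i < length (v' # vs)"
    then have "Suc (Suc i) < length (v # v' # vs)" by simp
    then have "wedge A ((v # v' # vs) ! Suc i) ((v # v' # vs) ! Suc (Suc i)) \<noteq> {}" using assms unfolding is_chain_def by blast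
    then show "wedge A ((v' # vs) ! i) ((v' # vs) ! Suc i) \<noteq> {}" by simp
  qed (use z in auto)
qed

lemma chain_lower:
  assumes w: "is_weight a" and al: "is_alphabet A"
  shows "is_chain A x y vs \<Longrightarrow> ff a x y \<le> sum_list (map (Delta a) vs)"
proof (induction vs arbitrary: x rule: induct_list012)
  case 1 then show ?case by (simp add: is_chain_def)
next
  case (2 v) then show ?case using diam[OF w al] by (simp add: chain_single)
next
  case (3 v v' vs)
  note c = chain_cons[OF "3.prems"]
  let ?S = "sum_list (map (Delta a) (v' # vs))"
  have IH: "\<And>z. z \<in> cyl A v' \<Longrightarrow> ff a z y \<le> ?S" using "3.IH"(2) c(4) by blast
  obtain wd where wd: "wd \<in> wedge A v v'" using c(3) by blast
  have "ff a x y \<le> Delta a v + ?S + e" if e: "0 < e" for e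
  proof (cases "wd \<in> wedge_half A v v'")
    case True
    then have wv: "wd \<in> cyl A v" unfolding wedge_half_def by auto
    obtain z where z: "z \<in> cyl A v'" "ff a wd z \<le> e" using wedge_touch[OF w al True e] by blast
    have "ff a x y \<le> ff a x wd + ff a wd z + ff a z y" using ff_tri[of a x y wd] ff_tri[of a wd y z] by simp
    then show ?thesis using diam[OF w al c(2) wv] z IH[OF z(1)] by simp
  next
    case False
    then have h: "wd \<in> wedge_half A v' v" using wd unfolding wedge_def by auto
    then have wv: "wd \<in> cyl A v'" unfolding wedge_half_def by auto
    obtain z where z: "z \<in> cyl A v" "ff a wd z \<le> e" using wedge_touch[OF w al h e] by blast
    have "ff a x y \<le> ff a x z + ff a z wd + ff a wd y" using ff_tri[of a x y z] ff_tri[of a z y wd] by simp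
    then show ?thesis using diam[OF w al c(2) z(1)] z(2) ff_sym[of a z wd] IH[OF wv] by simp
  qed
  then have "ff a x y \<le> Delta a v + ?S" by (rule field_le_epsilon)
  then show ?case by simp
qed

locale T =
  fixes A :: "nat set" and a :: "nat \<Rightarrow> real"
  assumes al: "is_alphabet A" and w: "is_weight a"
begin

abbreviation "I \<equiv> infwords A"
abbreviation "R \<equiv> rho A a"

lemma aA: "c \<in> A \<Longrightarrow> aa a c = a c" "c \<in> A \<Longrightarrow> 0 < a c" "c \<in> A \<Longrightarrow> a c \<le> 1/2"
  using weight_facts[OF w] alph(3)[OF al] by auto
lemma a12: "a 1 = 1/2" "a 2 = 1/2" using w unfolding is_weight_def by auto
lemma one_I: "one \<in> I" and two_I: "two \<in> I" using infwords_one[OF al] infwords_two[OF al] by auto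
lemma A12: "1 \<in> A" "2 \<in> A" using alph[OF al] by auto

lemma chain_sum_nonneg: "is_chain A x y vs \<Longrightarrow> 0 \<le> sum_list (map (Delta a) vs)"
  unfolding is_chain_def using Delta_bounds[OF w al] by (auto intro!: sum_list_nonneg)

lemma chain_triv: "x \<in> I \<Longrightarrow> y \<in> I \<Longrightarrow> is_chain A x y [[]]"
  unfolding is_chain_def by simp

lemma bdd: "bdd_below {sum_list (map (Delta a) vs) | vs. is_chain A x y vs}"
  using chain_sum_nonneg by (auto intro!: bdd_belowI[of _ 0])

lemma rho_le: "is_chain A x y vs \<Longrightarrow> R x y \<le> sum_list (map (Delta a) vs)"
  unfolding rho_def by (rule cInf_lower[OF _ bdd]) blast

lemma rho_ge: "x \<in> I \<Longrightarrow> y \<in> I \<Longrightarrow> (\<And>vs. is_chain A x y vs \<Longrightarrow> c \<le> sum_list (map (Delta a) vs)) \<Longrightarrow> c \<le> R x y"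
  unfolding rho_def by (rule cInf_greatest) (use chain_triv in auto)

lemma rho_nonneg: "x \<in> I \<Longrightarrow> y \<in> I \<Longrightarrow> 0 \<le> R x y"
  by (rule rho_ge) (use chain_sum_nonneg in auto)

lemma rho_le1: "x \<in> I \<Longrightarrow> y \<in> I \<Longrightarrow> R x y \<le> 1"
  using rho_le[OF chain_triv] by simp

lemma ff_le_rho: "x \<in> I \<Longrightarrow> y \<in> I \<Longrightarrow> ff a x y \<le> R x y"
  by (rule rho_ge) (use chain_lower[OF w al] in auto)

lemma wedge_sym: "wedge A u v = wedge A v u" unfolding wedge_def by auto

lemma chain_rev: assumes "is_chain A x y vs" shows "is_chain A y x (rev vs)"
  unfolding is_chain_def
proof (intro conjI allI impI)
  show "rev vs \<noteq> []" "\<forall>v\<in>set (rev vs). set v \<subseteq> A" "y \<in> cyl A (hd (rev vs))" "x \<in> cyl A (last (rev vs))"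
    using assms unfolding is_chain_def by (auto simp: hd_rev last_rev)
  fix i assume i: "Suc i < length (rev vs)"
  define j where "j = length vs - Suc (Suc i)"
  have j: "Suc j < length vs" "rev vs ! i = vs ! Suc j" "rev vs ! Suc i = vs ! j"
    using i unfolding j_def by (auto simp: rev_nth Suc_diff_Suc)
  have "wedge A (vs ! j) (vs ! Suc j) \<noteq> {}" using assms j(1) unfolding is_chain_def by blast
  then show "wedge A (rev vs ! i) (rev vs ! Suc i) \<noteq> {}" using j wedge_sym by simp
qed

lemma rho_sym: "R x y = R y x"
proof -
  have "{sum_list (map (Delta a) vs) | vs. is_chain A x y vs} = {sum_list (map (Delta a) vs) | vs. is_chain A y x vs}"
  proof (safe)
    fix vs assume "is_chain A x y vs"
    then show "\<exists>ws. sum_list (map (Delta a) vs) = sum_list (map (Delta a) ws) \<and> is_chain A y x ws"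
      by (intro exI[of _ "rev vs"]) (simp add: chain_rev rev_map[symmetric])
  next
    fix vs assume "is_chain A y x vs"
    then show "\<exists>ws. sum_list (map (Delta a) vs) = sum_list (map (Delta a) ws) \<and> is_chain A x y ws"
      by (intro exI[of _ "rev vs"]) (simp add: chain_rev rev_map[symmetric])
  qed
  then show ?thesis unfolding rho_def by simp
qed

lemma wedge_common: assumes "y \<in> cyl A v" "y \<in> cyl A v'" shows "wedge A v v' \<noteq> {}"
proof -
  have key: "y \<in> wedge_half A v2 v1" if h: "y \<in> cyl A v1" "y \<in> cyl A v2" "length v1 \<le> length v2" for v1 v2
    unfolding wedge_half_def
  proof (intro CollectI conjI allI impI)
    show "y \<in> cyl A v2" by fact
    fix n assume n: "max (length v2) (length v1) < n"
    then obtain m where m: "n = Suc m" by (cases n) auto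
    have yI: "y \<in> I" using h unfolding cyl_def by auto
    have "pref y n \<in> words A n" unfolding words_def using set_pref[OF yI] by simp
    then obtain u where u: "u \<in> words A n" "take m u = take m (pref y n)" "{pref y n, u} \<in> edges A n"
      using neighbor[OF al] m by blast
    have lv: "length v1 \<le> m" using n h(3) m by simp
    have "take (length v1) u = take (length v1) (take m u)" using lv by (simp add: min_def)
    also have "\<dots> = take (length v1) (pref y n)" using u(2) lv by (simp add: min_def)
    also have "\<dots> = v1" using take_pref[of "length v1" n y] h(1) lv m unfolding cyl_def by simp
    finally show "\<exists>u\<in>words A n. take (length v1) u = v1 \<and> {pref y n, u} \<in> edges A n" using u by blast
  qed
  show ?thesis
  proof (cases "length v \<le> length v'")
    case True
    then show ?thesis using key[OF assms] unfolding wedge_def by blast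
  next
    case False
    then show ?thesis using key[OF assms(2,1)] unfolding wedge_def by auto
  qed
qed

lemma chain_append:
  assumes c1: "is_chain A x y c1" and c2: "is_chain A y z c2"
  shows "is_chain A x z (c1 @ c2)"
  unfolding is_chain_def
proof (intro conjI allI impI)
  have ne: "c1 \<noteq> []" "c2 \<noteq> []" using c1 c2 unfolding is_chain_def by auto
  show "c1 @ c2 \<noteq> []" "\<forall>v\<in>set (c1 @ c2). set v \<subseteq> A" "x \<in> cyl A (hd (c1 @ c2))" "z \<in> cyl A (last (c1 @ c2))"
    using c1 c2 ne unfolding is_chain_def by auto
  have lw: "wedge A (last c1) (hd c2) \<noteq> {}"
    by (rule wedge_common) (use c1 c2 in \<open>auto simp: is_chain_def\<close>)
  fix i assume i: "Suc i < length (c1 @ c2)"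
  consider "Suc i < length c1" | "Suc i = length c1" | "length c1 \<le> i" by linarith
  then show "wedge A ((c1 @ c2) ! i) ((c1 @ c2) ! Suc i) \<noteq> {}"
  proof cases
    case 1 then show ?thesis using c1 unfolding is_chain_def by (simp add: nth_append)
  next
    case 2
    then have ii: "i = length c1 - 1" by simp
    have "(c1 @ c2) ! i = last c1" "(c1 @ c2) ! Suc i = hd c2"
      using ne 2 ii by (auto simp: nth_append last_conv_nth hd_conv_nth)
    then show ?thesis using lw by simp
  next
    case 3
    define j where "j = i - length c1"
    have j: "Suc j < length c2" "(c1 @ c2) ! i = c2 ! j" "(c1 @ c2) ! Suc i = c2 ! Suc j"
      using 3 i unfolding j_def by (auto simp: nth_append Suc_diff_le)
    then show ?thesis using c2 unfolding is_chain_def by simp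
  qed
qed

lemma rho_tri: assumes "x \<in> I" "y \<in> I" "z \<in> I" shows "R x z \<le> R x y + R y z"
proof -
  have "R x z - sum_list (map (Delta a) c2) \<le> R x y" if c2: "is_chain A y z c2" for c2
  proof (rule rho_ge[OF assms(1,2)])
    fix c1 assume c1: "is_chain A x y c1"
    have "R x z \<le> sum_list (map (Delta a) (c1 @ c2))" by (rule rho_le[OF chain_append[OF c1 c2]])
    then show "R x z - sum_list (map (Delta a) c2) \<le> sum_list (map (Delta a) c1)" by simp
  qed
  then have "R x z - R x y \<le> R y z" by (intro rho_ge[OF assms(2,3)]) (smt (verit))
  then show ?thesis by simp
qed

lemma wedge_half_cns: assumes "wd \<in> wedge_half A v1 v2" "c \<in> A"
  shows "cns c wd \<in> wedge_half A (c # v1) (c # v2)"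
  unfolding wedge_half_def
proof (intro CollectI conjI allI impI)
  show "cns c wd \<in> cyl A (c # v1)" using assms unfolding wedge_half_def by (auto simp: cyl_cns)
  fix n assume n: "max (length (c # v1)) (length (c # v2)) < n"
  then obtain m where m: "n = Suc m" by (cases n) auto
  then have "max (length v1) (length v2) < m" using n by simp
  then obtain u where u: "u \<in> words A m" "take (length v2) u = v2" "{pref wd m, u} \<in> edges A m"
    using assms(1) unfolding wedge_half_def by blast
  have "{pref (cns c wd) n, c # u} \<in> edges A n" using u(3) assms(2) m by auto
  moreover have "c # u \<in> words A n" using u(1) assms(2) m unfolding words_def by auto
  moreover have "take (length (c # v2)) (c # u) = c # v2" using u(2) by simp
  ultimately show "\<exists>u\<in>words A n. take (length (c # v2)) u = c # v2 \<and> {pref (cns c wd) n, u} \<in> edges A n" by blast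
qed

lemma chain_cns: assumes "is_chain A p q vs" "c \<in> A"
  shows "is_chain A (cns c p) (cns c q) (map ((#) c) vs)"
  unfolding is_chain_def
proof (intro conjI allI impI)
  show "map ((#) c) vs \<noteq> []" "\<forall>v\<in>set (map ((#) c) vs). set v \<subseteq> A" using assms unfolding is_chain_def by auto
  show "cns c p \<in> cyl A (hd (map ((#) c) vs))" "cns c q \<in> cyl A (last (map ((#) c) vs))"
    using assms unfolding is_chain_def by (auto simp: cyl_cns hd_map last_map)
  fix i assume i: "Suc i < length (map ((#) c) vs)"
  have "wedge A (vs ! i) (vs ! Suc i) \<noteq> {}" using assms i unfolding is_chain_def by auto
  then obtain wd where "wd \<in> wedge A (vs ! i) (vs ! Suc i)" by blast
  then have "cns c wd \<in> wedge A (c # vs ! i) (c # vs ! Suc i)"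
    unfolding wedge_def using wedge_half_cns[OF _ assms(2)] by blast
  then show "wedge A (map ((#) c) vs ! i) (map ((#) c) vs ! Suc i) \<noteq> {}" using i by auto
qed

lemma rho_cns: assumes "c \<in> A" "p \<in> I" "q \<in> I" shows "R (cns c p) (cns c q) \<le> a c * R p q"
proof -
  have ac: "0 < a c" using aA assms(1) by simp
  have "R (cns c p) (cns c q) / a c \<le> R p q"
  proof (rule rho_ge[OF assms(2,3)])
    fix vs assume vs: "is_chain A p q vs"
    have "R (cns c p) (cns c q) \<le> sum_list (map (Delta a) (map ((#) c) vs))" by (rule rho_le[OF chain_cns[OF vs assms(1)]])
    also have "\<dots> = a c * sum_list (map (Delta a) vs)" by (induction vs) (auto simp: algebra_simps)
    finally show "R (cns c p) (cns c q) / a c \<le> sum_list (map (Delta a) vs)" using ac by (simp add: field_simps)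
  qed
  then show ?thesis using ac by (simp add: field_simps)
qed

lemma rho_touch: assumes "i \<in> A" "i \<noteq> 1" shows "R (cns i one) (cns 1 two) = 0"
proof -
  have "R (cns i one) (cns 1 two) \<le> (1/2)^k" for k
  proof -
    let ?v1 = "i # replicate k 1" and ?v2 = "1 # replicate k 2"
    have c1: "cns i one \<in> cyl A ?v1" unfolding cyl_def using assms one_I by (simp add: pref_one)
    have c2: "cns 1 two \<in> cyl A ?v2" unfolding cyl_def using A12 two_I by (simp add: pref_two)
    have wh: "cns i one \<in> wedge_half A ?v1 ?v2" unfolding wedge_half_def
    proof (intro CollectI conjI allI impI c1)
      fix n assume n: "max (length ?v1) (length ?v2) < n"
      then obtain m where m: "n = Suc m" by (cases n) auto
      have km: "k \<le> m" using n m by simp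
      have "{1 # replicate m 2, i # replicate m 1} \<in> edges A (Suc m)" using assms by auto
      then have e: "{pref (cns i one) n, 1 # replicate m 2} \<in> edges A n" using m by (simp add: pref_one insert_commute)
      have wd: "1 # replicate m 2 \<in> words A n" using m A12 unfolding words_def by auto
      have t: "take (length ?v2) (1 # replicate m 2) = ?v2" using km by (simp add: min_def)
      show "\<exists>u\<in>words A n. take (length ?v2) u = ?v2 \<and> {pref (cns i one) n, u} \<in> edges A n"
        using e wd t by blast
    qed
    have ch: "is_chain A (cns i one) (cns 1 two) [?v1, ?v2]"
      unfolding is_chain_def using c1 c2 wh assms A12 unfolding wedge_def
      by (auto simp: less_Suc_eq nth_Cons')
    have "set ?v1 \<subseteq> A" "set ?v2 \<subseteq> A" using assms A12 by (auto simp: set_replicate_conv_if)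
    then have s1: "Delta a ?v1 \<le> (1/2)^Suc k" and s2: "Delta a ?v2 \<le> (1/2)^Suc k"
      using Delta_bounds[OF w al, of ?v1] Delta_bounds[OF w al, of ?v2] by (simp only: length_Cons length_replicate)+
    have "R (cns i one) (cns 1 two) \<le> Delta a ?v1 + Delta a ?v2" using rho_le[OF ch] by simp
    also have "\<dots> \<le> (1/2)^k" using s1 s2 by simp
    finally show ?thesis .
  qed
  then have "R (cns i one) (cns 1 two) \<le> 0" by (rule le_zero_geom)
  moreover have "0 \<le> R (cns i one) (cns 1 two)" by (rule rho_nonneg) (use assms one_I two_I A12 in auto)
  ultimately show ?thesis by simp
qed

end

context T begin

lemma decomp: "x \<in> I \<Longrightarrow> \<exists>c x'. x = cns c x' \<and> c \<in> A \<and> x' \<in> I"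
  using cns_shift[of x] infwords_0[of x A] infwords_shift[of x A] by metis

lemma tri3: "x \<in> I \<Longrightarrow> y \<in> I \<Longrightarrow> z \<in> I \<Longrightarrow> u \<in> I \<Longrightarrow> R x u \<le> R x y + R y z + R z u"
  using rho_tri[of x y u] rho_tri[of y z u] by simp

lemma touch2: assumes "i \<in> A" "i \<noteq> 1" "j \<in> A" "j \<noteq> 1" shows "R (cns i one) (cns j one) = 0"
proof -
  have "R (cns i one) (cns j one) \<le> R (cns i one) (cns 1 two) + R (cns 1 two) (cns j one)"
    by (rule rho_tri) (use assms one_I two_I A12 in auto)
  also have "\<dots> = 0" using rho_touch[OF assms(1,2)] rho_touch[OF assms(3,4)] rho_sym[of "cns 1 two" "cns j one"] by simp
  finally show ?thesis using rho_nonneg[of "cns i one" "cns j one"] assms one_I by simp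
qed

lemma hh_two: "hh a two = 1" unfolding hh_def by (rule gg_two[OF w])
lemma hh_one: "hh a one = 0" unfolding hh_def by (rule gg_one)

lemma cI: "c \<in> A \<Longrightarrow> x \<in> I \<Longrightarrow> cns c x \<in> I" by simp

lemma up1_aux: "x \<in> I \<Longrightarrow> R x one \<le> hh a x + (1/2)^n"
proof (induction n arbitrary: x)
  case 0
  then show ?case using rho_le1[OF 0 one_I] hh_bounds[of a x] by simp
next
  case (Suc n)
  define q :: real where "q = (1/2)^n"
  have q: "(1/2::real)^Suc n = q/2" "0 \<le> q" unfolding q_def by simp_all
  obtain c x' where x: "x = cns c x'" "c \<in> A" "x' \<in> I" using decomp[OF Suc.prems] by blast
  have IH: "R x' one \<le> hh a x' + q" using Suc.IH[OF x(3)] unfolding q_def .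
  have ac: "0 < a c" "a c \<le> 1/2" "aa a c = a c" using aA x(2) by auto
  have aq: "a c * q \<le> q/2" using mult_right_mono[OF ac(2) q(2)] by simp
  have "R x one \<le> hh a x + q/2"
  proof (cases "c = 1")
    case True
    have "R x one = R (cns 1 x') (cns 1 one)" using x True one_cns by simp
    also have "\<dots> \<le> a 1 * R x' one" by (rule rho_cns) (use A12 x one_I in auto)
    finally have "R x one \<le> a 1 * R x' one" .
    then have "R x one \<le> 1/2 * R x' one" unfolding a12 .
    moreover have "hh a x = hh a x' / 2" using hh_r1[of x a] x True by simp
    ultimately show ?thesis using IH by linarith
  next
    case False
    have "R x one \<le> R x (cns c one) + R (cns c one) (cns 1 two) + R (cns 1 two) one"
      by (rule tri3) (use x one_I two_I A12 in auto)
    moreover have "R x (cns c one) \<le> a c * R x' one" using rho_cns[OF x(2,3) one_I] x by simp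
    moreover have "R (cns c one) (cns 1 two) = 0" by (rule rho_touch) (use x False in auto)
    moreover have "R (cns 1 two) one \<le> 1/2"
    proof -
      have "R (cns 1 two) (cns 1 one) \<le> a 1 * R two one" by (rule rho_cns) (use A12 two_I one_I in auto)
      then have "R (cns 1 two) one \<le> 1/2 * R two one" unfolding a12 one_cns[symmetric] .
      then show ?thesis using rho_le1[OF two_I one_I] by linarith
    qed
    moreover have "a c * R x' one \<le> a c * hh a x' + a c * q"
      using mult_left_mono[OF IH, of "a c"] ac by (simp add: algebra_simps)
    moreover have "hh a x = 1/2 + a c * hh a x'" using hh_r2[of x a] x False ac by simp
    ultimately show ?thesis using aq by linarith
  qed
  then show ?case using q by simp
qed

lemma up1: "x \<in> I \<Longrightarrow> R x one \<le> hh a x"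
proof -
  assume x: "x \<in> I"
  have "R x one - hh a x \<le> 0"
  proof (rule le_zero_geom)
    fix n show "R x one - hh a x \<le> (1/2)^n" using up1_aux[OF x, of n] by simp
  qed
  then show ?thesis by simp
qed

lemma up2_aux: "x \<in> I \<Longrightarrow> R x two \<le> ff a x two + (1/2)^n"
proof (induction n arbitrary: x)
  case 0
  then show ?case using rho_le1[OF 0 two_I] ff_nonneg[of a x two] by simp
next
  case (Suc n)
  define q :: real where "q = (1/2)^n"
  have q: "(1/2::real)^Suc n = q/2" "0 \<le> q" unfolding q_def by simp_all
  obtain c x' where x: "x = cns c x'" "c \<in> A" "x' \<in> I" using decomp[OF Suc.prems] by blast
  have IH: "R x' two \<le> ff a x' two + q" using Suc.IH[OF x(3)] unfolding q_def .
  have ac: "0 < a c" "a c \<le> 1/2" "aa a c = a c" using aA x(2) by auto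
  have r2one: "R (cns 2 one) two \<le> 1/2"
  proof -
    have "R (cns 2 one) (cns 2 two) \<le> a 2 * R one two" by (rule rho_cns) (use A12 two_I one_I in auto)
    then show ?thesis using rho_le1[OF one_I two_I] a12 two_cns by simp
  qed
  have "R x two \<le> ff a x two + q/2"
  proof -
    consider "c = 2" | "c = 1" | "c \<noteq> 1" "c \<noteq> 2" by blast
    then show ?thesis
    proof cases
      case 1
      have "R x two = R (cns 2 x') (cns 2 two)" using x 1 two_cns by simp
      also have "\<dots> \<le> a 2 * R x' two" by (rule rho_cns) (use A12 x two_I in auto)
      finally have "R x two \<le> a 2 * R x' two" .
      then have "R x two \<le> 1/2 * R x' two" unfolding a12 .
      moreover have "ff a x two = 1/2 * ff a x' two"
        using ff_cns[OF w, of 2 x' two] weight_facts(2)[OF w] x 1 two_cns by simp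
      ultimately show ?thesis using IH by linarith
    next
      case 2
      have "R x two \<le> R x (cns 1 two) + R (cns 1 two) (cns 2 one) + R (cns 2 one) two"
        by (rule tri3) (use x one_I two_I A12 in auto)
      moreover have "R x (cns 1 two) \<le> 1/2 * R x' two"
      proof -
        have "R x (cns 1 two) \<le> a 1 * R x' two" using rho_cns[OF x(2,3) two_I] x 2 by simp
        then show ?thesis unfolding a12 .
      qed
      moreover have "R (cns 1 two) (cns 2 one) = 0" using rho_touch[of 2] A12 rho_sym by simp
      moreover have "ff a x two = ff a x' two / 2 + 1/2"
        using ff_r3[OF w, of x two] x 2 weight_facts(2)[OF w] hh_two by simp
      ultimately show ?thesis using IH r2one by linarith
    next
      case 3
      have "R x two \<le> R x (cns c one) + R (cns c one) (cns 2 one) + R (cns 2 one) two"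
        by (rule tri3) (use x one_I two_I A12 in auto)
      moreover have "R x (cns c one) \<le> a c * R x' one" using rho_cns[OF x(2,3) one_I] x by simp
      moreover have "R (cns c one) (cns 2 one) = 0" by (rule touch2) (use x 3 A12 in auto)
      moreover have "a c * R x' one \<le> a c * hh a x'" using mult_left_mono[OF up1[OF x(3)], of "a c"] ac by simp
      moreover have "ff a x two = a c * hh a x' + 1/2"
        using ff_r5[of x two a] x 3 weight_facts(2)[OF w] hh_two ac by simp
      ultimately show ?thesis using r2one q by linarith
    qed
  qed
  then show ?case using q by simp
qed

lemma up2: "x \<in> I \<Longrightarrow> R x two \<le> ff a x two"
proof -
  assume x: "x \<in> I"
  have "R x two - ff a x two \<le> 0"
  proof (rule le_zero_geom)
    fix n show "R x two - ff a x two \<le> (1/2)^n" using up2_aux[OF x, of n] by simp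
  qed
  then show ?thesis by simp
qed

lemma up_mixed: assumes x: "x = cns 1 x'" "x' \<in> I" and y: "y = cns d y'" "d \<in> A" "d \<noteq> 1" "y' \<in> I"
  shows "R x y \<le> ff a x y"
proof -
  have "R x y \<le> R x (cns 1 two) + R (cns 1 two) (cns d one) + R (cns d one) y"
    by (rule tri3) (use x y one_I two_I A12 in auto)
  moreover have "R x (cns 1 two) \<le> 1/2 * R x' two"
  proof -
    have "R x (cns 1 two) \<le> a 1 * R x' two" using rho_cns[OF A12(1) x(2) two_I] x by simp
    then show ?thesis unfolding a12 .
  qed
  moreover have "R (cns 1 two) (cns d one) = 0" using rho_touch[OF y(2,3)] rho_sym by simp
  moreover have "R (cns d one) y \<le> a d * R one y'" using rho_cns[OF y(2) one_I y(4)] y by simp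
  moreover have "a d * R one y' \<le> a d * hh a y'"
    using mult_left_mono[OF up1[OF y(4)], of "a d"] aA[OF y(2)] rho_sym[of one y'] by simp
  moreover have "ff a x y = ff a x' two / 2 + a d * hh a y'"
    using ff_r3[OF w, of x y] x y aA[OF y(2)] by simp
  ultimately show ?thesis using up2[OF x(2)] by linarith
qed

lemma up_aux: "x \<in> I \<Longrightarrow> y \<in> I \<Longrightarrow> R x y \<le> ff a x y + (1/2)^n"
proof (induction n arbitrary: x y)
  case 0
  then show ?case using rho_le1[OF 0] ff_nonneg[of a x y] by simp
next
  case (Suc n)
  define q :: real where "q = (1/2)^n"
  have q: "(1/2::real)^Suc n = q/2" "0 \<le> q" unfolding q_def by simp_all
  obtain c x' where x: "x = cns c x'" "c \<in> A" "x' \<in> I" using decomp[OF Suc.prems(1)] by blast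
  obtain d y' where y: "y = cns d y'" "d \<in> A" "y' \<in> I" using decomp[OF Suc.prems(2)] by blast
  have ac: "0 < a c" "a c \<le> 1/2" "aa a c = a c" using aA x(2) by auto
  have ad: "0 < a d" "a d \<le> 1/2" "aa a d = a d" using aA y(2) by auto
  have "R x y \<le> ff a x y + q/2"
  proof -
    consider "c = d" | "c = 1" "d \<noteq> 1" | "c \<noteq> 1" "d = 1" | "c \<noteq> d" "c \<noteq> 1" "d \<noteq> 1" by blast
    then show ?thesis
    proof cases
      case 1
      have IH: "R x' y' \<le> ff a x' y' + q" using Suc.IH[OF x(3) y(3)] unfolding q_def .
      have "R x y \<le> a c * R x' y'" using rho_cns[OF x(2,3) y(3)] x y 1 by simp
      moreover have "a c * R x' y' \<le> a c * ff a x' y' + a c * q"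
        using mult_left_mono[OF IH, of "a c"] ac by (simp add: algebra_simps)
      moreover have "a c * q \<le> q/2" using mult_right_mono[OF ac(2) q(2)] by simp
      moreover have "ff a x y = a c * ff a x' y'" using ff_cns[OF w, of c x' y'] x y 1 ac by simp
      ultimately show ?thesis by linarith
    next
      case 2
      then show ?thesis using up_mixed[of x x' y d y'] x y q by simp
    next
      case 3
      have "R y x \<le> ff a y x" using up_mixed[of y y' x c x'] x y 3 by simp
      then show ?thesis using rho_sym[of x y] ff_sym[of a x y] q by simp
    next
      case 4
      have "R x y \<le> R x (cns c one) + R (cns c one) (cns d one) + R (cns d one) y"
        by (rule tri3) (use x y one_I in auto)
      moreover have "R x (cns c one) \<le> a c * R x' one" using rho_cns[OF x(2,3) one_I] x by simp
      moreover have "R (cns c one) (cns d one) = 0" by (rule touch2) (use x y 4 in auto)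
      moreover have "R (cns d one) y \<le> a d * R one y'" using rho_cns[OF y(2) one_I y(3)] y by simp
      moreover have "a c * R x' one \<le> a c * hh a x'" using mult_left_mono[OF up1[OF x(3)], of "a c"] ac by simp
      moreover have "a d * R one y' \<le> a d * hh a y'"
        using mult_left_mono[OF up1[OF y(3)], of "a d"] ad rho_sym[of one y'] by simp
      moreover have "ff a x y = a c * hh a x' + a d * hh a y'" using ff_r5[of x y a] x y 4 ac ad by simp
      ultimately show ?thesis using q by linarith
    qed
  qed
  then show ?case using q by simp
qed

lemma rho_eq: assumes "x \<in> I" "y \<in> I" shows "R x y = ff a x y"
proof -
  have "R x y - ff a x y \<le> 0"
  proof (rule le_zero_geom)
    fix n show "R x y - ff a x y \<le> (1/2)^n" using up_aux[OF assms, of n] by simp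
  qed
  then show ?thesis using ff_le_rho[OF assms] by simp
qed

end

definition nxt :: "(nat \<Rightarrow> real) \<Rightarrow> (nat \<Rightarrow> nat) \<times> real \<Rightarrow> (nat \<Rightarrow> nat) \<times> real" where
  "nxt a p = (case p of (x, t) \<Rightarrow> if x 0 = 1 then (shift x, 2 * t) else if t \<le> 1/2 then (two, 2 * t)
      else (shift x, (t - 1/2) / aa a (x 0)))"
definition ltr :: "(nat \<Rightarrow> nat) \<times> real \<Rightarrow> nat" where
  "ltr p = (case p of (x, t) \<Rightarrow> if x 0 = 1 then 1 else if t \<le> 1/2 then 1 else x 0)"
definition RR :: "(nat \<Rightarrow> real) \<Rightarrow> (nat \<Rightarrow> nat) \<Rightarrow> real \<Rightarrow> nat \<Rightarrow> nat" where
  "RR a x t = (\<lambda>n. ltr ((nxt a ^^ n) (x, t)))"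

lemma RR_cns: "RR a x t = cns (ltr (x, t)) (RR a (fst (nxt a (x, t))) (snd (nxt a (x, t))))"
proof (rule ext)
  fix n show "RR a x t n = cns (ltr (x, t)) (RR a (fst (nxt a (x, t))) (snd (nxt a (x, t)))) n"
    by (cases n) (simp_all add: RR_def funpow_Suc_right del: funpow.simps)
qed

lemma RR1: "x 0 = 1 \<Longrightarrow> RR a x t = cns 1 (RR a (shift x) (2 * t))"
  by (subst RR_cns) (simp add: nxt_def ltr_def)
lemma RR2: "x 0 \<noteq> 1 \<Longrightarrow> t \<le> 1/2 \<Longrightarrow> RR a x t = cns 1 (RR a two (2 * t))"
  by (subst RR_cns) (simp add: nxt_def ltr_def)
lemma RR3: "x 0 \<noteq> 1 \<Longrightarrow> \<not> t \<le> 1/2 \<Longrightarrow> RR a x t = cns (x 0) (RR a (shift x) ((t - 1/2) / aa a (x 0)))"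
  by (subst RR_cns) (simp add: nxt_def ltr_def)

lemma abs_half: "\<bar>G - M\<bar> \<le> (q::real) \<Longrightarrow> \<bar>G/2 - M/2\<bar> \<le> q/2" by linarith
lemma abs_scale: assumes "\<bar>G - M\<bar> \<le> (q::real)" "0 \<le> al" "al \<le> 1/2" "0 \<le> q"
  shows "\<bar>(1/2 + al * G) - (1/2 + al * M)\<bar> \<le> q/2"
proof -
  have "\<bar>(1/2 + al * G) - (1/2 + al * M)\<bar> = al * \<bar>G - M\<bar>" using assms(2) by (simp add: abs_mult right_diff_distrib[symmetric])
  also have "\<dots> \<le> 1/2 * q" by (rule mult_mono) (use assms in auto)
  finally show ?thesis by simp
qed

context T begin

lemma RR_I: assumes "x \<in> I" shows "RR a x t \<in> I"
proof -
  have inv: "fst ((nxt a ^^ n) (x, t)) \<in> I" for n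
  proof (induction n)
    case 0 then show ?case using assms by simp
  next
    case (Suc n)
    obtain y s where ys: "(nxt a ^^ n) (x, t) = (y, s)" by fastforce
    then have "y \<in> I" using Suc by simp
    have e: "(nxt a ^^ Suc n) (x, t) = nxt a (y, s)" using ys by simp
    show ?case unfolding e using \<open>y \<in> I\<close> infwords_shift[of y A] two_I by (simp add: nxt_def)
  qed
  have "ltr ((nxt a ^^ n) (x, t)) \<in> A" for n
  proof -
    obtain y s where ys: "(nxt a ^^ n) (x, t) = (y, s)" by fastforce
    then have "y \<in> I" using inv[of n] by simp
    then show ?thesis using ys A12 infwords_0[of y A] by (simp add: ltr_def)
  qed
  then show ?thesis unfolding RR_def infwords_def by simp
qed

lemma split_facts:
  assumes x: "x \<in> I" "x 0 \<noteq> 1" and u: "0 \<le> u" "u \<le> hh a x"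
  shows "u \<le> 1/2 \<Longrightarrow> RR a x u = cns 1 (RR a two (2*u)) \<and> 0 \<le> 2*u \<and> 2*u \<le> hh a two"
    and "\<not> u \<le> 1/2 \<Longrightarrow> RR a x u = cns (x 0) (RR a (shift x) ((u - 1/2) / a (x 0)))
          \<and> 0 \<le> (u - 1/2) / a (x 0) \<and> (u - 1/2) / a (x 0) \<le> hh a (shift x)
          \<and> u = 1/2 + a (x 0) * ((u - 1/2) / a (x 0))"
proof -
  have c: "x 0 \<in> A" using infwords_0[OF x(1)] .
  have ac: "0 < a (x 0)" "aa a (x 0) = a (x 0)" using aA c by auto
  have hx: "hh a x = 1/2 + a (x 0) * hh a (shift x)" using hh_r2[of x a, OF x(2)] ac by simp
  show "u \<le> 1/2 \<Longrightarrow> RR a x u = cns 1 (RR a two (2*u)) \<and> 0 \<le> 2*u \<and> 2*u \<le> hh a two"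
    using RR2[where x=x and a=a and t=u, OF x(2)] u hh_two by simp
  assume nu: "\<not> u \<le> 1/2"
  have "u - 1/2 \<le> a (x 0) * hh a (shift x)" using u(2) hx by linarith
  then have "(u - 1/2) / a (x 0) \<le> hh a (shift x)" by (simp add: pos_divide_le_eq[OF ac(1)] mult.commute)
  then show "RR a x u = cns (x 0) (RR a (shift x) ((u - 1/2) / a (x 0)))
          \<and> 0 \<le> (u - 1/2) / a (x 0) \<and> (u - 1/2) / a (x 0) \<le> hh a (shift x)
          \<and> u = 1/2 + a (x 0) * ((u - 1/2) / a (x 0))"
    using RR3[where x=x and a=a and t=u, OF x(2) nu] ac nu by simp
qed

lemma G_aux:
  "x \<in> I \<Longrightarrow> 0 \<le> s \<Longrightarrow> s \<le> hh a x \<Longrightarrow> 0 \<le> t \<Longrightarrow> t \<le> hh a x \<Longrightarrow>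
    \<bar>gg a (RR a x s) (RR a x t) - min s t\<bar> \<le> (1/2)^n \<and> \<bar>gg a (RR a x t) x - t\<bar> \<le> (1/2)^n"
proof (induction n arbitrary: x s t)
  case 0
  have "hh a x \<le> 1" by (rule hh_bounds)
  then show ?case using 0 gg_basic(1,2)[of a "RR a x s" "RR a x t"] gg_basic(1,2)[of a "RR a x t" x]
    by (simp add: abs_le_iff min_def)
next
  case (Suc n)
  define q :: real where "q = (1/2)^n"
  have q: "(1/2::real)^Suc n = q/2" "0 \<le> q" unfolding q_def by simp_all
  have IH: "\<And>y s t. y \<in> I \<Longrightarrow> 0 \<le> s \<Longrightarrow> s \<le> hh a y \<Longrightarrow> 0 \<le> t \<Longrightarrow> t \<le> hh a y \<Longrightarrow>
    \<bar>gg a (RR a y s) (RR a y t) - min s t\<bar> \<le> q \<and> \<bar>gg a (RR a y t) y - t\<bar> \<le> q"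
    using Suc.IH unfolding q_def by blast
  have hx1: "hh a x \<le> 1" by (rule hh_bounds)
  have xI: "x \<in> I" by fact
  have "\<bar>gg a (RR a x s) (RR a x t) - min s t\<bar> \<le> q/2 \<and> \<bar>gg a (RR a x t) x - t\<bar> \<le> q/2"
  proof (cases "x 0 = 1")
    case True
    let ?x = "shift x"
    have x'I: "?x \<in> I" using infwords_shift[OF xI] .
    have hx: "hh a x = hh a ?x / 2" using hh_r1[of x a, OF True] .
    have ih: "\<bar>gg a (RR a ?x (2*s)) (RR a ?x (2*t)) - min (2*s) (2*t)\<bar> \<le> q"
         "\<bar>gg a (RR a ?x (2*t)) ?x - 2*t\<bar> \<le> q"
      using IH[OF x'I, of "2*s" "2*t"] Suc.prems hx by auto
    have e1: "gg a (RR a x s) (RR a x t) = gg a (RR a ?x (2*s)) (RR a ?x (2*t)) / 2"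
      using RR1[where x=x and a=a and t=s, OF True] RR1[where x=x and a=a and t=t, OF True] gg_s1[of "RR a x s" "RR a x t" a] by simp
    have e2: "gg a (RR a x t) x = gg a (RR a ?x (2*t)) ?x / 2"
      using RR1[where x=x and a=a and t=t, OF True] gg_s1[of "RR a x t" x a] True by simp
    have m: "min (2*s) (2*t) / 2 = min s t" by (simp add: min_def)
    show ?thesis using abs_half[OF ih(1)] abs_half[OF ih(2)] unfolding e1 e2 m by simp
  next
    case False
    let ?x = "shift x" and ?c = "x 0"
    have x'I: "?x \<in> I" using infwords_shift[OF xI] .
    have c: "?c \<in> A" using infwords_0[OF xI] .
    have ac: "0 < a ?c" "a ?c \<le> 1/2" "aa a ?c = a ?c" using aA c by auto
    have sf1: "\<And>u. 0 \<le> u \<Longrightarrow> u \<le> hh a x \<Longrightarrow> u \<le> 1/2 \<Longrightarrow> RR a x u = cns 1 (RR a two (2*u)) \<and> 0 \<le> 2*u \<and> 2*u \<le> hh a two"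
      using split_facts(1)[OF xI False] by blast
    have sf2: "\<And>u. 0 \<le> u \<Longrightarrow> u \<le> hh a x \<Longrightarrow> \<not> u \<le> 1/2 \<Longrightarrow> RR a x u = cns ?c (RR a ?x ((u - 1/2) / a ?c))
          \<and> 0 \<le> (u - 1/2) / a ?c \<and> (u - 1/2) / a ?c \<le> hh a ?x \<and> u = 1/2 + a ?c * ((u - 1/2) / a ?c)"
      using split_facts(2)[OF xI False] by blast
    have part2: "\<bar>gg a (RR a x t) x - t\<bar> \<le> q/2"
    proof (cases "t \<le> 1/2")
      case True
      note f = sf1[OF Suc.prems(4,5) True]
      have ih: "\<bar>gg a (RR a two (2*t)) two - 2*t\<bar> \<le> q" using IH[OF two_I, of "2*t" "2*t"] f by auto
      have e: "gg a (RR a x t) x = gg a (RR a two (2*t)) two / 2" using f gg_s3[of "RR a x t" x a] False by simp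
      show ?thesis using abs_half[OF ih] unfolding e by simp
    next
      case nt: False
      note f = sf2[OF Suc.prems(4,5) nt]
      let ?t = "(t - 1/2) / a ?c"
      have ih: "\<bar>gg a (RR a ?x ?t) ?x - ?t\<bar> \<le> q" using IH[OF x'I, of ?t ?t] f by auto
      have e: "gg a (RR a x t) x = 1/2 + a ?c * gg a (RR a ?x ?t) ?x" using f gg_s2[of "RR a x t" x a] False ac by simp
      have "\<bar>gg a (RR a x t) x - (1/2 + a ?c * ?t)\<bar> \<le> q/2" unfolding e by (rule abs_scale[OF ih]) (use ac q in auto)
      then show ?thesis using f by simp
    qed
    have part1: "\<bar>gg a (RR a x s) (RR a x t) - min s t\<bar> \<le> q/2"
    proof (cases "s \<le> 1/2")
      case s: True
      note fs = sf1[OF Suc.prems(2,3) s]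
      show ?thesis
      proof (cases "t \<le> 1/2")
        case t: True
        note ft = sf1[OF Suc.prems(4,5) t]
        have ih: "\<bar>gg a (RR a two (2*s)) (RR a two (2*t)) - min (2*s) (2*t)\<bar> \<le> q" using IH[OF two_I, of "2*s" "2*t"] fs ft by auto
        have e: "gg a (RR a x s) (RR a x t) = gg a (RR a two (2*s)) (RR a two (2*t)) / 2"
          using fs ft gg_s1[of "RR a x s" "RR a x t" a] by simp
        have m: "min (2*s) (2*t) / 2 = min s t" by (simp add: min_def)
        show ?thesis using abs_half[OF ih] unfolding e m by simp
      next
        case t: False
        note ft = sf2[OF Suc.prems(4,5) t]
        have ih: "\<bar>gg a (RR a two (2*s)) two - 2*s\<bar> \<le> q" using IH[OF two_I, of "2*s" "2*s"] fs by auto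
        have e: "gg a (RR a x s) (RR a x t) = gg a (RR a two (2*s)) two / 2"
          using fs ft gg_s3[of "RR a x s" "RR a x t" a] False by simp
        have m: "min s t = 2*s/2" using s t by simp
        show ?thesis using abs_half[OF ih] unfolding e m by simp
      qed
    next
      case s: False
      note fs = sf2[OF Suc.prems(2,3) s]
      let ?s = "(s - 1/2) / a ?c"
      show ?thesis
      proof (cases "t \<le> 1/2")
        case t: True
        note ft = sf1[OF Suc.prems(4,5) t]
        have ih: "\<bar>gg a (RR a two (2*t)) two - 2*t\<bar> \<le> q" using IH[OF two_I, of "2*t" "2*t"] ft by auto
        have e: "gg a (RR a x s) (RR a x t) = gg a two (RR a two (2*t)) / 2"
          using fs ft gg_s4[of "RR a x s" "RR a x t" a] False by simp
        have sy: "gg a two (RR a two (2*t)) = gg a (RR a two (2*t)) two" by (rule gg_basic(3))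
        have m: "min s t = 2*t/2" using s t by simp
        show ?thesis using abs_half[OF ih] unfolding e m sy by simp
      next
        case t: False
        note ft = sf2[OF Suc.prems(4,5) t]
        let ?t = "(t - 1/2) / a ?c"
        have ih: "\<bar>gg a (RR a ?x ?s) (RR a ?x ?t) - min ?s ?t\<bar> \<le> q" using IH[OF x'I, of ?s ?t] fs ft by auto
        have e: "gg a (RR a x s) (RR a x t) = 1/2 + a ?c * gg a (RR a ?x ?s) (RR a ?x ?t)"
          using fs ft gg_s2[of "RR a x s" "RR a x t" a] False ac by simp
        have es: "s = 1/2 + a ?c * ?s" and et: "t = 1/2 + a ?c * ?t" using fs ft by auto
        have m: "min s t = 1/2 + a ?c * min ?s ?t"
        proof (cases "?s \<le> ?t")
          case True
          have "a ?c * ?s \<le> a ?c * ?t" using mult_left_mono[OF True, of "a ?c"] ac(1) by linarith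
          then have "s \<le> t" using es et by linarith
          then show ?thesis using True es by (simp add: min_def)
        next
          case False
          have "a ?c * ?t \<le> a ?c * ?s" using mult_left_mono[of ?t ?s "a ?c"] False ac(1) by linarith
          then have "t \<le> s" using es et by linarith
          then show ?thesis using False et by (simp add: min_def)
        qed
        show ?thesis unfolding e m by (rule abs_scale[OF ih]) (use ac q in auto)
      qed
    qed
    show ?thesis using part1 part2 by simp
  qed
  then show ?case using q by simp
qed

lemma G_exact: assumes "x \<in> I" "0 \<le> s" "s \<le> hh a x" "0 \<le> t" "t \<le> hh a x"
  shows "gg a (RR a x s) (RR a x t) = min s t" "gg a (RR a x t) x = t"
proof -
  have "\<bar>gg a (RR a x s) (RR a x t) - min s t\<bar> \<le> 0"
    by (rule le_zero_geom) (use G_aux[OF assms] in blast)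
  then show "gg a (RR a x s) (RR a x t) = min s t" by simp
  have "\<bar>gg a (RR a x t) x - t\<bar> \<le> 0"
    by (rule le_zero_geom) (use G_aux[OF assms] in blast)
  then show "gg a (RR a x t) x = t" by simp
qed

end

context T begin

lemma hh_RR: assumes "x \<in> I" "0 \<le> u" "u \<le> hh a x" shows "hh a (RR a x u) = u"
proof -
  have "gg a (RR a x u) (RR a x u) = min u u" by (rule G_exact(1)) (use assms in auto)
  then show ?thesis by (simp add: hh_def)
qed

lemma same_exact: assumes "0 \<le> t" "t \<le> 1/2"
  shows "gg a (cns 1 (RR a two (2*t))) (cns 1 (RR a two (2*t))) = t"
proof -
  have e1: "gg a (cns 1 (RR a two (2*t))) (cns 1 (RR a two (2*t))) = hh a (RR a two (2*t)) / 2"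
    using gg_s1[of "cns 1 (RR a two (2*t))" "cns 1 (RR a two (2*t))" a] by (simp add: hh_def)
  have e2: "hh a (RR a two (2*t)) = 2*t" by (rule hh_RR) (use assms two_I hh_two in auto)
  show ?thesis unfolding e1 e2 by simp
qed

lemma M_aux: "x \<in> I \<Longrightarrow> y \<in> I \<Longrightarrow> 0 \<le> t \<Longrightarrow> t \<le> gg a x y \<Longrightarrow>
   \<bar>gg a (RR a x t) (RR a y t) - t\<bar> \<le> (1/2)^n"
proof (induction n arbitrary: x y t)
  case 0
  then show ?case using gg_basic(1,2)[of a "RR a x t" "RR a y t"] gg_basic(2)[of a x y] by (simp add: abs_le_iff)
next
  case (Suc n)
  define q :: real where "q = (1/2)^n"
  have q: "(1/2::real)^Suc n = q/2" "0 \<le> q" unfolding q_def by simp_all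
  have IH: "\<And>x y t. x \<in> I \<Longrightarrow> y \<in> I \<Longrightarrow> 0 \<le> t \<Longrightarrow> t \<le> gg a x y \<Longrightarrow> \<bar>gg a (RR a x t) (RR a y t) - t\<bar> \<le> q"
    using Suc.IH unfolding q_def by blast
  note xI = Suc.prems(1) and yI = Suc.prems(2) and t0 = Suc.prems(3) and tg = Suc.prems(4)
  have x'I: "shift x \<in> I" and y'I: "shift y \<in> I" using infwords_shift xI yI by auto
  have "\<bar>gg a (RR a x t) (RR a y t) - t\<bar> \<le> q/2"
  proof -
    consider "x 0 = 1" "y 0 = 1" | "x 0 = 1" "y 0 \<noteq> 1" | "x 0 \<noteq> 1" "y 0 = 1"
      | "x 0 \<noteq> 1" "y 0 \<noteq> 1" "x 0 \<noteq> y 0" | "x 0 \<noteq> 1" "x 0 = y 0" by blast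
    then show ?thesis
    proof cases
      case 1
      have g: "gg a x y = gg a (shift x) (shift y) / 2" using gg_s1[of x y a, OF 1(1) 1(2)] .
      have ih: "\<bar>gg a (RR a (shift x) (2*t)) (RR a (shift y) (2*t)) - 2*t\<bar> \<le> q" using IH[OF x'I y'I] t0 tg g by simp
      have e: "gg a (RR a x t) (RR a y t) = gg a (RR a (shift x) (2*t)) (RR a (shift y) (2*t)) / 2"
        using RR1[where x=x and a=a and t=t, OF 1(1)] RR1[where x=y and a=a and t=t, OF 1(2)]
          gg_s1[of "RR a x t" "RR a y t" a] by simp
      show ?thesis using abs_half[OF ih] unfolding e by simp
    next
      case 2
      have g: "gg a x y = gg a (shift x) two / 2" using gg_s3[of x y a, OF 2(1) 2(2)] .
      have th: "t \<le> 1/2" using tg g gg_basic(2)[of a "shift x" two] by simp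
      have ih: "\<bar>gg a (RR a (shift x) (2*t)) (RR a two (2*t)) - 2*t\<bar> \<le> q" using IH[OF x'I two_I] t0 tg g by simp
      have e: "gg a (RR a x t) (RR a y t) = gg a (RR a (shift x) (2*t)) (RR a two (2*t)) / 2"
        using RR1[where x=x and a=a and t=t, OF 2(1)] RR2[where x=y and a=a and t=t, OF 2(2) th]
          gg_s1[of "RR a x t" "RR a y t" a] by simp
      show ?thesis using abs_half[OF ih] unfolding e by simp
    next
      case 3
      have g: "gg a x y = gg a two (shift y) / 2" using gg_s4[of x y a, OF 3(1) 3(2)] .
      have th: "t \<le> 1/2" using tg g gg_basic(2)[of a two "shift y"] by simp
      have ih: "\<bar>gg a (RR a two (2*t)) (RR a (shift y) (2*t)) - 2*t\<bar> \<le> q" using IH[OF two_I y'I] t0 tg g by simp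
      have e: "gg a (RR a x t) (RR a y t) = gg a (RR a two (2*t)) (RR a (shift y) (2*t)) / 2"
        using RR2[where x=x and a=a and t=t, OF 3(1) th] RR1[where x=y and a=a and t=t, OF 3(2)]
          gg_s1[of "RR a x t" "RR a y t" a] by simp
      show ?thesis using abs_half[OF ih] unfolding e by simp
    next
      case 4
      have g: "gg a x y = 1/2" using gg_s5[of x y a, OF 4(1) 4(2) 4(3)] .
      have th: "t \<le> 1/2" using tg g by simp
      have e: "gg a (RR a x t) (RR a y t) = t"
        using RR2[where x=x and a=a and t=t, OF 4(1) th] RR2[where x=y and a=a and t=t, OF 4(2) th]
          same_exact[OF t0 th] by simp
      show ?thesis using e q by simp
    next
      case 5
      have c: "x 0 \<in> A" using infwords_0[OF xI] .
      have ac: "0 < a (x 0)" "a (x 0) \<le> 1/2" "aa a (x 0) = a (x 0)" using aA c by auto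
      have y5: "y 0 \<noteq> 1" using 5 by simp
      show ?thesis
      proof (cases "t \<le> 1/2")
        case th: True
        have e: "gg a (RR a x t) (RR a y t) = t"
          using RR2[where x=x and a=a and t=t, OF 5(1) th] RR2[where x=y and a=a and t=t, OF y5 th]
            same_exact[OF t0 th] by simp
        show ?thesis using e q by simp
      next
        case th: False
        let ?t = "(t - 1/2) / a (x 0)"
        have g: "gg a x y = 1/2 + a (x 0) * gg a (shift x) (shift y)" using gg_s2[of x y a, OF 5(2) 5(1)] ac by simp
        have tt: "t = 1/2 + a (x 0) * ?t" using ac(1) by simp
        have t'0: "0 \<le> ?t" using th ac(1) by simp
        have "a (x 0) * ?t \<le> a (x 0) * gg a (shift x) (shift y)" using tg g tt by linarith
        then have "t - 1/2 \<le> a (x 0) * gg a (shift x) (shift y)" using ac(1) by simp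
        then have t'g: "?t \<le> gg a (shift x) (shift y)" by (simp add: pos_divide_le_eq[OF ac(1)] mult.commute)
        have ih: "\<bar>gg a (RR a (shift x) ?t) (RR a (shift y) ?t) - ?t\<bar> \<le> q" using IH[OF x'I y'I t'0 t'g] .
        have e: "gg a (RR a x t) (RR a y t) = 1/2 + a (x 0) * gg a (RR a (shift x) ?t) (RR a (shift y) ?t)"
          using RR3[where x=x and a=a and t=t, OF 5(1) th] RR3[where x=y and a=a and t=t, OF y5 th] 5(2) y5
            gg_s2[of "RR a x t" "RR a y t" a] ac by simp
        have "\<bar>gg a (RR a x t) (RR a y t) - (1/2 + a (x 0) * ?t)\<bar> \<le> q/2"
          unfolding e by (rule abs_scale[OF ih]) (use ac q in auto)
        then show ?thesis using tt by simp
      qed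
    qed
  qed
  then show ?case using q by simp
qed

lemma M_exact: "x \<in> I \<Longrightarrow> y \<in> I \<Longrightarrow> 0 \<le> t \<Longrightarrow> t \<le> gg a x y \<Longrightarrow> gg a (RR a x t) (RR a y t) = t"
proof -
  assume h: "x \<in> I" "y \<in> I" "0 \<le> t" "t \<le> gg a x y"
  have "\<bar>gg a (RR a x t) (RR a y t) - t\<bar> \<le> 0" by (rule le_zero_geom) (rule M_aux[OF h])
  then show ?thesis by simp
qed

lemma ffR1: "x \<in> I \<Longrightarrow> 0 \<le> s \<Longrightarrow> s \<le> hh a x \<Longrightarrow> 0 \<le> t \<Longrightarrow> t \<le> hh a x \<Longrightarrow> ff a (RR a x s) (RR a x t) = \<bar>s - t\<bar>"
  unfolding ff_def using hh_RR[of x s] hh_RR[of x t] G_exact(1)[of x s t] by (simp add: min_def abs_if)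

lemma ffR2: "x \<in> I \<Longrightarrow> 0 \<le> t \<Longrightarrow> t \<le> hh a x \<Longrightarrow> ff a (RR a x t) x = hh a x - t"
  unfolding ff_def using hh_RR[of x t] G_exact(2)[of x t t] by simp

lemma ffR3: "x \<in> I \<Longrightarrow> y \<in> I \<Longrightarrow> ff a (RR a x (gg a x y)) (RR a y (gg a x y)) = 0"
  unfolding ff_def using hh_RR[of x "gg a x y"] hh_RR[of y "gg a x y"] M_exact[of x y "gg a x y"]
    gg_basic(1)[of a x y] gg_le_hh[of a x y] by simp

lemma cross: assumes xI: "x \<in> I" and yI: "y \<in> I"
  and s: "gg a x y \<le> s" "s \<le> hh a x" and t: "gg a x y \<le> t" "t \<le> hh a y"
  shows "ff a (RR a x s) (RR a y t) = s + t - 2 * gg a x y"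
proof -
  let ?g = "gg a x y"
  have g0: "0 \<le> ?g" "?g \<le> hh a x" "?g \<le> hh a y" using gg_basic(1) gg_le_hh by auto
  have up: "ff a (RR a x s) (RR a y t) \<le> ff a (RR a x s) (RR a x ?g) + ff a (RR a x ?g) (RR a y ?g) + ff a (RR a y ?g) (RR a y t)"
    using ff_tri[of a "RR a x s" "RR a y t" "RR a x ?g"] ff_tri[of a "RR a x ?g" "RR a y t" "RR a y ?g"] by simp
  have u1: "ff a (RR a x s) (RR a x ?g) = s - ?g" using ffR1[OF xI, of s ?g] s g0 by simp
  have u2: "ff a (RR a y ?g) (RR a y t) = t - ?g" using ffR1[OF yI, of ?g t] t g0 by simp
  have u3: "ff a (RR a x ?g) (RR a y ?g) = 0" by (rule ffR3[OF xI yI])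
  have lo: "ff a x y \<le> ff a x (RR a x s) + ff a (RR a x s) (RR a y t) + ff a (RR a y t) y"
    using ff_tri[of a x y "RR a x s"] ff_tri[of a "RR a x s" y "RR a y t"] by simp
  have l1: "ff a x (RR a x s) = hh a x - s" using ffR2[OF xI, of s] s g0 ff_sym[of a x "RR a x s"] by simp
  have l2: "ff a (RR a y t) y = hh a y - t" using ffR2[OF yI, of t] t g0 by simp
  have fxy: "ff a x y = hh a x + hh a y - 2 * ?g" unfolding ff_def ..
  show ?thesis using up u1 u2 u3 lo l1 l2 fxy by linarith
qed

end

context T begin

definition rel :: "((nat \<Rightarrow> nat) \<times> (nat \<Rightarrow> nat)) set" where
  "rel = {(w, u). w \<in> I \<and> u \<in> I \<and> R w u = 0}"

lemma rel_iff: "(w, u) \<in> rel \<longleftrightarrow> w \<in> I \<and> u \<in> I \<and> ff a w u = 0"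
  unfolding rel_def using rho_eq by auto

lemma tree_eq: "tree A a = I // rel" unfolding tree_def rel_def by simp

lemma equiv_rel: "equiv I rel"
proof (rule equivI)
  show "refl_on I rel" unfolding refl_on_def using rel_iff by auto
  show "rel \<subseteq> I \<times> I" using rel_iff by auto
  show "sym rel" unfolding sym_def using rel_iff ff_sym by metis
  show "trans rel" unfolding trans_def
  proof (intro allI impI)
    fix x y z assume "(x, y) \<in> rel" "(y, z) \<in> rel"
    then show "(x, z) \<in> rel" using rel_iff ff_tri[of a x z y] ff_nonneg[of a x z] by auto
  qed
qed

lemma cls_mem: "x \<in> I \<Longrightarrow> x \<in> rel `` {x}" using rel_iff by auto

lemma cls_eq: "x \<in> I \<Longrightarrow> y \<in> I \<Longrightarrow> ff a x y = 0 \<Longrightarrow> rel `` {x} = rel `` {y}"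
  by (rule equiv_class_eq[OF equiv_rel]) (simp add: rel_iff)

lemma tdist_cls: assumes "x \<in> I" "y \<in> I" shows "tdist A a (rel `` {x}) (rel `` {y}) = ff a x y"
proof -
  define x0 where "x0 = (SOME w. w \<in> rel `` {x})"
  define y0 where "y0 = (SOME w. w \<in> rel `` {y})"
  have "x0 \<in> rel `` {x}" unfolding x0_def by (rule someI[of _ x]) (rule cls_mem[OF assms(1)])
  then have x0: "x0 \<in> I" "ff a x x0 = 0" using rel_iff by auto
  have "y0 \<in> rel `` {y}" unfolding y0_def by (rule someI[of _ y]) (rule cls_mem[OF assms(2)])
  then have y0: "y0 \<in> I" "ff a y y0 = 0" using rel_iff by auto
  have "tdist A a (rel `` {x}) (rel `` {y}) = R x0 y0" unfolding tdist_def x0_def y0_def ..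
  also have "\<dots> = ff a x0 y0" using rho_eq x0 y0 by simp
  also have "\<dots> = ff a x y"
  proof -
    have "ff a x0 y0 \<le> ff a x0 x + ff a x y + ff a y y0"
      using ff_tri[of a x0 y0 x] ff_tri[of a x y0 y] by simp
    moreover have "ff a x y \<le> ff a x x0 + ff a x0 y0 + ff a y0 y"
      using ff_tri[of a x y x0] ff_tri[of a x0 y y0] by simp
    ultimately show ?thesis using x0 y0 ff_sym[of a x0 x] ff_sym[of a y0 y] by linarith
  qed
  finally show ?thesis .
qed

lemma geo_pair: assumes xI: "x \<in> I" and yI: "y \<in> I"
  shows "\<exists>\<gamma>. \<gamma> 0 = rel `` {x} \<and> \<gamma> (tdist A a (rel `` {x}) (rel `` {y})) = rel `` {y} \<and>
      \<gamma> ` {0..tdist A a (rel `` {x}) (rel `` {y})} \<subseteq> I // rel \<and>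
      (\<forall>s\<in>{0..tdist A a (rel `` {x}) (rel `` {y})}. \<forall>t\<in>{0..tdist A a (rel `` {x}) (rel `` {y})}.
         tdist A a (\<gamma> s) (\<gamma> t) = \<bar>s - t\<bar>)"
proof -
  define g where "g = gg a x y"
  define hx where "hx = hh a x"
  define hy where "hy = hh a y"
  define d where "d = ff a x y"
  have g0: "0 \<le> g" "g \<le> hx" "g \<le> hy" unfolding g_def hx_def hy_def using gg_basic(1) gg_le_hh by auto
  have dd: "d = hx + hy - 2 * g" unfolding d_def hx_def hy_def g_def ff_def ..
  have td: "tdist A a (rel `` {x}) (rel `` {y}) = d" unfolding d_def by (rule tdist_cls[OF xI yI])
  define P where "P s = (if s \<le> hx - g then RR a x (hx - s) else RR a y (s - hx + 2 * g))" for s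
  define \<gamma> where "\<gamma> s = rel `` {P s}" for s
  have PI: "P s \<in> I" for s unfolding P_def using RR_I[OF xI] RR_I[OF yI] by simp
  have key: "ff a (P s) (P t) = \<bar>s - t\<bar>" if s: "s \<in> {0..d}" and t: "t \<in> {0..d}" for s t
  proof -
    have cr: "ff a (P s) (P t) = t - s" if st: "s \<le> hx - g" "\<not> t \<le> hx - g" "s \<in> {0..d}" "t \<in> {0..d}" for s t
    proof -
      have "ff a (RR a x (hx - s)) (RR a y (t - hx + 2 * g)) = (hx - s) + (t - hx + 2 * g) - 2 * g"
        unfolding g_def by (rule cross[OF xI yI]) (use st dd g0 in \<open>auto simp: g_def hx_def hy_def\<close>)
      then show ?thesis unfolding P_def using st by simp
    qed
    consider "s \<le> hx - g" "t \<le> hx - g" | "\<not> s \<le> hx - g" "\<not> t \<le> hx - g" | "s \<le> hx - g" "\<not> t \<le> hx - g"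
      | "\<not> s \<le> hx - g" "t \<le> hx - g" by blast
    then show ?thesis
    proof cases
      case 1
      have "ff a (RR a x (hx - s)) (RR a x (hx - t)) = \<bar>(hx - s) - (hx - t)\<bar>"
        by (rule ffR1[OF xI]) (use 1 s t g0 in \<open>auto simp: hx_def\<close>)
      then show ?thesis unfolding P_def using 1 by (simp add: abs_minus_commute)
    next
      case 2
      have "ff a (RR a y (s - hx + 2 * g)) (RR a y (t - hx + 2 * g)) = \<bar>(s - hx + 2 * g) - (t - hx + 2 * g)\<bar>"
        by (rule ffR1[OF yI]) (use 2 s t g0 dd in \<open>auto simp: hy_def\<close>)
      then show ?thesis unfolding P_def using 2 by simp
    next
      case 3
      then show ?thesis using cr[OF 3 s t] by simp
    next
      case 4
      then show ?thesis using cr[OF 4(2,1) t s] ff_sym[of a "P s" "P t"] by simp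
    qed
  qed
  have d0: "0 \<le> d" unfolding d_def by (rule ff_nonneg)
  show ?thesis
  proof (intro exI[of _ \<gamma>] conjI ballI)
    have "ff a (P 0) x = 0"
    proof -
      have "P 0 = RR a x hx" unfolding P_def using g0 by simp
      then show ?thesis using ffR2[OF xI, of hx] g0 unfolding hx_def by simp
    qed
    then show "\<gamma> 0 = rel `` {x}" unfolding \<gamma>_def by (rule cls_eq[OF PI xI])
    have "ff a (P d) y = 0"
    proof (cases "d \<le> hx - g")
      case True
      then have e: "hy = g" "d = hx - g" using dd g0 by auto
      then have "P d = RR a x g" unfolding P_def by simp
      moreover have "ff a (RR a x g) y \<le> ff a (RR a x g) (RR a y g) + ff a (RR a y g) y" by (rule ff_tri)
      moreover have "ff a (RR a x g) (RR a y g) = 0" unfolding g_def by (rule ffR3[OF xI yI])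
      moreover have "ff a (RR a y g) y = hy - g" using ffR2[OF yI, of g] g0 unfolding hy_def by simp
      ultimately show ?thesis using e ff_nonneg[of a "RR a x g" y] by simp
    next
      case False
      then have "P d = RR a y hy" unfolding P_def using dd by simp
      then show ?thesis using ffR2[OF yI, of hy] g0 unfolding hy_def by simp
    qed
    then show "\<gamma> (tdist A a (rel `` {x}) (rel `` {y})) = rel `` {y}" unfolding td \<gamma>_def by (rule cls_eq[OF PI yI])
    show "\<gamma> ` {0..tdist A a (rel `` {x}) (rel `` {y})} \<subseteq> I // rel"
      unfolding \<gamma>_def using PI by (auto intro: quotientI)
    fix s t assume s: "s \<in> {0..tdist A a (rel `` {x}) (rel `` {y})}" and t: "t \<in> {0..tdist A a (rel `` {x}) (rel `` {y})}"
    show "tdist A a (\<gamma> s) (\<gamma> t) = \<bar>s - t\<bar>" unfolding \<gamma>_def tdist_cls[OF PI PI]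
      using key s t unfolding td by simp
  qed
qed

lemma main: "geodesic_space (tree A a) (tdist A a)"
  unfolding geodesic_space_def tree_eq
proof (intro ballI)
  fix X Y assume X: "X \<in> I // rel" and Y: "Y \<in> I // rel"
  obtain x where x: "x \<in> I" "X = rel `` {x}" using X by (auto elim: quotientE)
  obtain y where y: "y \<in> I" "Y = rel `` {y}" using Y by (auto elim: quotientE)
  show "\<exists>\<gamma>. \<gamma> 0 = X \<and> \<gamma> (tdist A a X Y) = Y \<and> \<gamma> ` {0..tdist A a X Y} \<subseteq> I // rel \<and>
          (\<forall>s\<in>{0..tdist A a X Y}. \<forall>t\<in>{0..tdist A a X Y}. tdist A a (\<gamma> s) (\<gamma> t) = \<bar>s - t\<bar>)"
    unfolding x(2) y(2) by (rule geo_pair[OF x(1) y(1)])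
qed

end

theorem proposition5p1:
  fixes A :: "nat set" and a :: "nat \<Rightarrow> real"
  assumes "is_alphabet A" and "is_weight a"
  shows "geodesic_space (tree A a) (tdist A a)"
proof -
  interpret T A a using assms by unfold_locales
  show ?thesis by (rule main)
qed


end
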